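(* Let $n\in\mathbb N$, let $A$ be a Young function satisfying (C1), (C2), (C3), and let $\varphi$ be a gauge function. Then the function $J$ is increasing on $(0,\infty)$, $\lim_{t\to0^+}J(t)=0$ and $\lim_{t\to\infty}J(t)=\infty$; in particular $J$ is a bijection of $[0,\infty)$ onto itself.
   Context: A gauge function is a function $\varphi\colon[0,\infty)\to[0,\infty)$ that is increasing, continuous and vanishes only at $0$, and (standing assumption) such that $r\mapsto\varphi(r)/r^n$ is non-increasing on $(0,\infty)$. A Young function is a non-trivial convex $A\colon[0,\infty)\to[0,\infty]$ with $A(0)=0$; $\widetilde A(t)=\sup_{\tau\ge0}(\tau t-A(\tau))$. Conditions: (C1) if $n=1$, $\lim_{t\to\infty}t/A(t)=0$; if $n\ge2$, $\int^\infty (t/A(t))^{1/(n-1)}dt<\infty$. (C2) $0<A(t)<\infty$ for $t>0$. (C3) if $n=1$, $\lim_{t\to0^+}t/A(t)=\infty$; if $n\ge2$, $\int_0(t/A(t))^{1/(n-1)}dt=\infty$. $B=A$ if $n=1$; for $n\ge2$, $B$ is the Young conjugate of $t\mapsto t^{n'}\int_t^\infty\widetilde A(s)s^{-1-n'}ds$, $n'=n/(n-1)$. $J(0)=0$ and $J(s)=s\,B^{-1}(\varphi(s)/s^n)$ for $s>0$. *)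

theory Defs
  imports "HOL-Analysis.Analysis"
begin

text \<open>Young functions take values in [0,\<infinity>]; we use extended reals.
  Only the values on [0,\<infinity>) are relevant.\<close>

definition young_function :: "(real \<Rightarrow> ereal) \<Rightarrow> bool" where
  "young_function A \<longleftrightarrow>
     A 0 = 0 \<and>
     (\<forall>t\<ge>0. 0 \<le> A t) \<and>
     (\<forall>x\<ge>0. \<forall>y\<ge>0. \<forall>u. 0 \<le> u \<and> u \<le> 1 \<longrightarrow>
        A ((1 - u) * x + u * y) \<le> ereal (1 - u) * A x + ereal u * A y) \<and>
     (\<exists>t>0. A t \<noteq> 0) \<and> (\<exists>t>0. A t \<noteq> \<infinity>)"

definition young_conj :: "(real \<Rightarrow> ereal) \<Rightarrow> real \<Rightarrow> ereal" where
  "young_conj A t = (SUP \<tau>\<in>{0..}. ereal (\<tau> * t) - A \<tau>)"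

definition gauge_function :: "nat \<Rightarrow> (real \<Rightarrow> real) \<Rightarrow> bool" where
  "gauge_function n \<phi> \<longleftrightarrow>
     mono_on {0..} \<phi> \<and> continuous_on {0..} \<phi> \<and>
     (\<forall>t\<ge>0. 0 \<le> \<phi> t) \<and> (\<forall>t\<ge>0. \<phi> t = 0 \<longleftrightarrow> t = 0) \<and>
     (\<forall>r s. 0 < r \<and> r \<le> s \<longrightarrow> \<phi> s / s ^ n \<le> \<phi> r / r ^ n)"

definition cond_C1 :: "nat \<Rightarrow> (real \<Rightarrow> ereal) \<Rightarrow> bool" where
  "cond_C1 n A \<longleftrightarrow>
     (if n = 1 then ((\<lambda>t. t / real_of_ereal (A t)) \<longlongrightarrow> 0) at_top
      else (\<exists>t0>0. (\<integral>\<^sup>+ t\<in>{t0..}. ennreal ((t / real_of_ereal (A t)) powr (1 / (real n - 1))) \<partial>lborel) < \<infinity>))"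

definition cond_C2 :: "(real \<Rightarrow> ereal) \<Rightarrow> bool" where
  "cond_C2 A \<longleftrightarrow> (\<forall>t>0. 0 < A t \<and> A t < \<infinity>)"

definition cond_C3 :: "nat \<Rightarrow> (real \<Rightarrow> ereal) \<Rightarrow> bool" where
  "cond_C3 n A \<longleftrightarrow>
     (if n = 1 then filterlim (\<lambda>t. t / real_of_ereal (A t)) at_top (at_right 0)
      else (\<forall>t0>0. (\<integral>\<^sup>+ t\<in>{0<..t0}. ennreal ((t / real_of_ereal (A t)) powr (1 / (real n - 1))) \<partial>lborel) = \<infinity>))"

definition holder_conj :: "nat \<Rightarrow> real" where
  "holder_conj n = real n / (real n - 1)"

definition E_fun :: "nat \<Rightarrow> (real \<Rightarrow> ereal) \<Rightarrow> real \<Rightarrow> ereal" where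
  "E_fun n A t = enn2ereal (ennreal (t powr holder_conj n) *
      (\<integral>\<^sup>+ s\<in>{t..}. e2ennreal (young_conj A s) * ennreal (s powr (- 1 - holder_conj n)) \<partial>lborel))"

definition B_fun :: "nat \<Rightarrow> (real \<Rightarrow> ereal) \<Rightarrow> real \<Rightarrow> ereal" where
  "B_fun n A = (if n = 1 then A else young_conj (E_fun n A))"

definition gen_inv :: "(real \<Rightarrow> ereal) \<Rightarrow> real \<Rightarrow> real" where
  "gen_inv B s = Sup {t. 0 \<le> t \<and> B t \<le> ereal s}"

definition J_fun :: "nat \<Rightarrow> (real \<Rightarrow> ereal) \<Rightarrow> (real \<Rightarrow> real) \<Rightarrow> real \<Rightarrow> real" where
  "J_fun n A \<phi> s = (if s = 0 then 0 else s * gen_inv (B_fun n A) (\<phi> s / s ^ n))"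

end

theory Submission
  imports Defs
begin


locale bfun =
  fixes n :: nat and b :: "real \<Rightarrow> real"
  assumes n: "n \<ge> 1"
  and b0: "b 0 = 0" and bpos: "\<And>t. t>0 \<Longrightarrow> 0 < b t"
  and bcont: "continuous_on {0<..} b"
  and bscale: "\<And>l t. 0<l \<Longrightarrow> l<1 \<Longrightarrow> 0<t \<Longrightarrow> b (l*t) < l^n * b t"
begin

lemma bweak: assumes "0<l" "l\<le>1" "0\<le>t" shows "b (l*t) \<le> l^n * b t"
proof (cases "t = 0")
  case True then show ?thesis using b0 by simp
next
  case False
  then show ?thesis using bscale[of l t] assms by (cases "l=1") force+
qed

lemma bnonneg: "t \<ge> 0 \<Longrightarrow> b t \<ge> 0"
  using b0 bpos by (cases "t=0") (auto intro: less_imp_le)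

lemma bstrict: assumes "0 \<le> s" "s < t" shows "b s < b t"
proof (cases "s = 0")
  case True then show ?thesis using b0 bpos assms by simp
next
  case False
  hence "b ((s/t)*t) < (s/t)^n * b t" using assms by (intro bscale) auto
  also have "\<dots> \<le> 1 * b t" using assms bnonneg[of t]
    by (intro mult_right_mono power_le_one) auto
  finally show ?thesis using assms by simp
qed

lemma bmono: "0 \<le> s \<Longrightarrow> s \<le> t \<Longrightarrow> b s \<le> b t"
  using bstrict by (cases "s = t") (auto intro: less_imp_le)

lemma bbig: assumes "t \<ge> 1" shows "t^n * b 1 \<le> b t"
proof -
  have "b ((1/t)*t) \<le> (1/t)^n * b t" using assms by (intro bweak) auto
  hence "b 1 \<le> b t / t^n" using assms by (simp add: power_divide)
  thus ?thesis using assms by (simp add: field_simps)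
qed

lemma bsmallt: assumes "0 \<le> t" "t \<le> 1" shows "b t \<le> t * b 1"
proof (cases "t = 0")
  case True then show ?thesis using b0 by simp
next
  case False
  have "b (t*1) \<le> t^n * b 1" using assms False by (intro bweak) auto
  also have "\<dots> \<le> t * b 1" using assms n bnonneg[of 1]
    by (intro mult_right_mono) (auto simp: power_le_one intro: power_decreasing[of 1 n t, simplified])
  finally show ?thesis by simp
qed

lemma bsurj: assumes "u \<ge> 0" shows "\<exists>t\<ge>0. b t = u"
proof (cases "u = 0")
  case True then show ?thesis using b0 by auto
next
  case False
  hence u: "u > 0" using assms by simp
  have b1: "b 1 > 0" using bpos by simp
  define r where "r = min 1 (u / (2 * b 1))"
  have r: "0 < r" "r \<le> 1" using u b1 by (auto simp: r_def)
  have "b r \<le> r * b 1" using r by (intro bsmallt) auto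
  also have "\<dots> \<le> u/2" using b1 by (simp add: r_def min_def field_simps)
  finally have br: "b r \<le> u" using u by simp
  define R where "R = max 1 (u / b 1)"
  have R: "R \<ge> 1" by (simp add: R_def)
  have "u \<le> R * b 1" using b1 by (simp add: R_def max_def field_simps)
  also have "\<dots> \<le> R^n * b 1" using R n b1
    by (intro mult_right_mono) (auto intro: power_increasing[of 1 n R, simplified])
  also have "\<dots> \<le> b R" using R by (rule bbig)
  finally have bR: "u \<le> b R" .
  have "continuous_on {r..R} b" by (rule continuous_on_subset[OF bcont]) (use r in auto)
  then obtain x where "r \<le> x" "x \<le> R" "b x = u" using IVT'[of b r u R] br bR r R by auto
  thus ?thesis using r by (intro exI[of _ x]) auto
qed

definition ginv where "ginv u = Sup {t. 0 \<le> t \<and> b t \<le> u}"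

lemma ginv_eq: assumes "0 \<le> t" shows "ginv (b t) = t"
proof -
  have "{x. 0 \<le> x \<and> b x \<le> b t} = {0..t}"
    using bstrict bmono assms by (auto simp: not_le[symmetric]) (meson not_le)
  thus ?thesis using assms by (simp add: ginv_def)
qed

lemma ginv: assumes "u \<ge> 0" shows "ginv u \<ge> 0" "b (ginv u) = u"
  using bsurj[OF assms] ginv_eq by auto

lemma ginv_pos: assumes "u > 0" shows "ginv u > 0"
  using ginv[of u] assms b0 by (cases "ginv u = 0") auto

lemma ginv_strict: assumes "0 \<le> u" "u < u'" shows "ginv u < ginv u'"
proof (rule ccontr)
  assume "\<not> ?thesis"
  hence "b (ginv u') \<le> b (ginv u)" using ginv assms by (intro bmono) auto
  thus False using ginv[of u] ginv[of u'] assms by auto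
qed

lemma ginv_mono: assumes "0 \<le> u" "u \<le> u'" shows "ginv u \<le> ginv u'"
  using ginv_strict[of u u'] assms by (cases "u = u'") auto

lemma ginv_cont: assumes "u0 > 0" shows "isCont ginv u0"
proof -
  define t0 where "t0 = ginv u0"
  have t0: "t0 > 0" "b t0 = u0" using ginv_pos ginv assms by (auto simp: t0_def)
  let ?S = "{t0/2..2*t0}"
  have c: "continuous_on ?S b" by (rule continuous_on_subset[OF bcont]) (use t0 in auto)
  have "continuous_on (b ` ?S) ginv"
    by (rule continuous_on_inv[OF c]) (use ginv_eq t0 in auto)
  moreover have "b ` ?S = {b (t0/2)..b (2*t0)}"
  proof
    show "b ` ?S \<subseteq> {b (t0/2)..b (2*t0)}" using bmono t0 by auto
    show "{b (t0/2)..b (2*t0)} \<subseteq> b ` ?S"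
    proof
      fix y assume "y \<in> {b (t0/2)..b (2*t0)}"
      then obtain x where "t0/2 \<le> x" "x \<le> 2*t0" "b x = y"
        using IVT'[of b "t0/2" y "2*t0"] c t0 by auto
      thus "y \<in> b ` ?S" by auto
    qed
  qed
  ultimately have "continuous_on {b (t0/2)..b (2*t0)} ginv" by simp
  moreover have "u0 \<in> interior {b (t0/2)..b (2*t0)}"
    using bstrict[of "t0/2" t0] bstrict[of t0 "2*t0"] t0 by auto
  ultimately show ?thesis using continuous_on_interior by blast
qed


lemma J_main:
  fixes A :: "real \<Rightarrow> ereal" and \<phi> :: "real \<Rightarrow> real"
  assumes Bb: "\<And>t. t \<ge> 0 \<Longrightarrow> B_fun n A t = ereal (b t)"
  and bsmall: "\<And>e. e>0 \<Longrightarrow> \<exists>d>0. \<forall>t. 0<t \<and> t<d \<longrightarrow> b t \<le> e * t^n"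
  and phi: "gauge_function n \<phi>"
  shows "strict_mono_on {0<..} (J_fun n A \<phi>) \<and>
         (J_fun n A \<phi> \<longlongrightarrow> 0) (at_right 0) \<and>
         filterlim (J_fun n A \<phi>) at_top at_top \<and>
         bij_betw (J_fun n A \<phi>) {0..} {0..}"
proof -
  have pmono: "mono_on {0..} \<phi>" and pcont: "continuous_on {0..} \<phi>"
    and pnn: "\<And>t. t \<ge> 0 \<Longrightarrow> 0 \<le> \<phi> t" and pz: "\<And>t. t \<ge> 0 \<Longrightarrow> \<phi> t = 0 \<longleftrightarrow> t = 0"
    and prat: "\<And>r s. 0 < r \<Longrightarrow> r \<le> s \<Longrightarrow> \<phi> s / s ^ n \<le> \<phi> r / r ^ n"
    using phi unfolding gauge_function_def by auto
  have ppos: "\<phi> t > 0" if "t > 0" for t using pnn[of t] pz[of t] that by auto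
  define J where "J = J_fun n A \<phi>"
  define u where "u s = \<phi> s / s^n" for s
  have upos: "u s > 0" if "s > 0" for s using ppos[OF that] that by (simp add: u_def)
  have ginv_eq': "gen_inv (B_fun n A) x = ginv x" for x
  proof -
    have "{t. 0 \<le> t \<and> B_fun n A t \<le> ereal x} = {t. 0 \<le> t \<and> b t \<le> x}" using Bb by auto
    thus ?thesis by (simp add: gen_inv_def ginv_def)
  qed
  have Jf: "J s = s * ginv (u s)" if "s > 0" for s
    using that by (simp add: J_def J_fun_def ginv_eq' u_def)
  have J0: "J 0 = 0" by (simp add: J_def J_fun_def)
  have Jpos: "J s > 0" if "s > 0" for s using Jf[OF that] ginv_pos[OF upos[OF that]] that by simp
  have b1: "b 1 > 0" using bpos by simp
  have Jstrict: "J s1 < J s2" if "0 < s1" "s1 < s2" for s1 s2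
  proof -
    define l where "l = s1 / s2"
    have l: "0 < l" "l < 1" using that by (auto simp: l_def)
    define v1 where "v1 = ginv (u s1)"
    have v1: "v1 > 0" "b v1 = u s1" using ginv_pos ginv upos that by (auto simp: v1_def less_imp_le)
    have "\<phi> s1 \<le> \<phi> s2" using pmono that by (auto simp: mono_on_def)
    hence "l^n * u s1 \<le> u s2" using that by (simp add: u_def l_def power_divide divide_right_mono)
    moreover have "b (l * v1) < l^n * b v1" using l v1 by (intro bscale) auto
    ultimately have "b (l * v1) < u s2" using v1 by simp
    hence "ginv (b (l * v1)) < ginv (u s2)" using l v1 by (intro ginv_strict) (auto intro: bnonneg)
    hence "l * v1 < ginv (u s2)" using ginv_eq[of "l * v1"] l v1 by simp
    hence "s2 * (l * v1) < s2 * ginv (u s2)" using that by simp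
    thus ?thesis using that Jf[of s1] Jf[of s2] by (simp add: l_def v1_def)
  qed
  have smono: "strict_mono_on {0<..} J" by (auto intro!: strict_mono_onI Jstrict)
  have key: "(s * ginv (u s))^n * b (ginv (u s)) = \<phi> s * (ginv (u s))^n" if "s > 0" for s
  proof -
    have "b (ginv (u s)) = u s" using ginv upos that by (auto intro: less_imp_le)
    thus ?thesis using that by (simp add: u_def power_mult_distrib)
  qed
  have lim0: "(J \<longlongrightarrow> 0) (at_right 0)"
  proof (rule tendstoI)
    fix e :: real assume e: "e > 0"
    have "continuous_on {0..1} \<phi>" by (rule continuous_on_subset[OF pcont]) auto
    hence "(\<phi> \<longlongrightarrow> \<phi> 0) (at_right 0)"
      by (rule continuous_on_Icc_at_rightD) simp
    hence "(\<phi> \<longlongrightarrow> 0) (at_right 0)" using pz[of 0] by simp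
    hence ev1: "\<forall>\<^sub>F s in at_right 0. \<phi> s < e^n * b 1"
      using e b1 by (intro order_tendstoD) auto
    have ev2: "\<forall>\<^sub>F s in at_right 0. s < e \<and> s > 0"
      using e by (auto simp: eventually_at_right_field intro!: exI[of _ e])
    show "\<forall>\<^sub>F s in at_right 0. dist (J s) 0 < e"
      using ev1 ev2
    proof eventually_elim
      case (elim s)
      define v where "v = ginv (u s)"
      have v: "v > 0" using ginv_pos upos elim by (simp add: v_def)
      have Js: "J s = s * v" using Jf elim by (simp add: v_def)
      have "J s < e"
      proof (cases "v < 1")
        case True
        have "s * v < s" using mult_strict_left_mono[of v 1 s] elim True by simp
        then show ?thesis using Js elim by linarith
      next
        case False
        hence "v^n * b 1 \<le> b v" using bbig by simp
        hence "(s * v)^n * (v^n * b 1) \<le> (s * v)^n * b v" using elim v by (intro mult_left_mono) auto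
        also have "\<dots> = \<phi> s * v^n" using key[of s] elim by (simp add: v_def)
        finally have "v^n * ((s * v)^n * b 1) \<le> v^n * \<phi> s" by (simp add: mult_ac)
        hence "(s * v)^n * b 1 \<le> \<phi> s" using v by simp
        hence "(s * v)^n * b 1 < e^n * b 1" using elim by simp
        hence "(s * v)^n < e^n" using b1 by simp
        hence "s * v < e" by (rule power_less_imp_less_base) (use e in simp)
        thus ?thesis using Js by simp
      qed
      thus ?case using Jpos[of s] elim by (simp add: dist_real_def)
    qed
  qed
  have liminf: "filterlim J at_top at_top"
  proof (rule filterlim_at_top_gt[where c=0, THEN iffD2], intro allI impI)
    fix Z :: real assume Z: "Z > 0"
    obtain d where d: "d > 0" "\<And>t. 0<t \<Longrightarrow> t<d \<Longrightarrow> b t \<le> (\<phi> 1 / Z^n) * t^n"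
      using bsmall[of "\<phi> 1 / Z^n"] ppos[of 1] Z by auto
    show "\<forall>\<^sub>F s in at_top. Z \<le> J s"
    proof (rule eventually_at_top_linorderI[of "max 1 (Z/d)"])
      fix s assume s: "s \<ge> max 1 (Z/d)"
      hence s1: "s \<ge> 1" "s \<ge> Z/d" by auto
      define v where "v = ginv (u s)"
      have v: "v > 0" using ginv_pos upos s1 by (simp add: v_def)
      have Js: "J s = s * v" using Jf s1 by (simp add: v_def)
      show "Z \<le> J s"
      proof (cases "v < d")
        case True
        have "(s * v)^n * b v \<le> (s * v)^n * ((\<phi> 1 / Z^n) * v^n)"
          using d(2)[OF v True] s1 v by (intro mult_left_mono) auto
        hence "\<phi> s * v^n \<le> (s * v)^n * ((\<phi> 1 / Z^n) * v^n)" using key[of s] s1 by (simp add: v_def)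
        hence "v^n * \<phi> s \<le> v^n * ((s * v)^n * \<phi> 1 / Z^n)" by (simp add: mult_ac)
        hence "\<phi> s \<le> (s * v)^n * \<phi> 1 / Z^n" by (rule mult_left_le_imp_le) (use v in simp)
        moreover have "\<phi> 1 \<le> \<phi> s" using pmono s1 by (auto simp: mono_on_def)
        ultimately have "\<phi> 1 \<le> (s * v)^n * \<phi> 1 / Z^n" by simp
        hence "\<phi> 1 * Z^n \<le> (s * v)^n * \<phi> 1" using Z by (simp add: le_divide_eq)
        hence "Z^n * \<phi> 1 \<le> (s * v)^n * \<phi> 1" by (simp add: mult.commute)
        hence "Z^n \<le> (s * v)^n" by (rule mult_right_le_imp_le) (use ppos[of 1] in simp)
        hence "Z \<le> s * v" using s1 v Z n power_mono_iff[of Z "s * v" n] by simp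
        thus ?thesis using Js by simp
      next
        case False
        have "Z = (Z/d) * d" using d by simp
        also have "\<dots> \<le> s * v" by (rule mult_mono) (use False s1 d Z in auto)
        finally show ?thesis using Js by simp
      qed
    qed
  qed
  have Jstrict0: "strict_mono_on {0..} J"
  proof (rule strict_mono_onI)
    fix r s :: real assume "r \<in> {0..}" "s \<in> {0..}" "r < s"
    thus "J r < J s" using Jstrict[of r s] J0 Jpos[of s] by (cases "r = 0") auto
  qed
  have Jnn: "J s \<ge> 0" if "s \<ge> 0" for s using J0 Jpos[of s] that by (cases "s=0") auto
  have ucont: "continuous_on {0<..} u"
    unfolding u_def by (intro continuous_intros continuous_on_subset[OF pcont]) auto
  have gcont: "continuous_on {0<..} ginv"
    by (intro continuous_at_imp_continuous_on ballI ginv_cont) auto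
  have Jcont: "continuous_on {0<..} J"
  proof -
    have "continuous_on {0<..} (\<lambda>s. s * ginv (u s))"
      by (intro continuous_intros continuous_on_compose2[OF gcont ucont]) (auto intro: upos)
    thus ?thesis by (rule continuous_on_cong[THEN iffD1, rotated -1]) (auto simp: Jf)
  qed
  have surj: "y \<in> J ` {0..}" if "y \<ge> 0" for y
  proof (cases "y = 0")
    case True thus ?thesis using J0 by force
  next
    case False
    hence y: "y > 0" using that by simp
    have "\<forall>\<^sub>F s in at_right 0. J s < y \<and> s > 0"
      using order_tendstoD(2)[OF lim0 y] by (auto simp: eventually_at_right_field elim: eventually_mono)
    then obtain s1 where s1: "s1 > 0" "J s1 < y"
      by (metis (mono_tags, lifting) eventually_happens' trivial_limit_at_right_real)
    have "\<forall>\<^sub>F s in at_top. y \<le> J s \<and> s \<ge> s1"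
      using filterlim_at_top[THEN iffD1, OF liminf] eventually_ge_at_top[of s1] by (auto intro: eventually_conj)
    then obtain s2 where s2: "y \<le> J s2" "s2 \<ge> s1"
      using eventually_happens' trivial_limit_at_top_linorder by blast
    have "continuous_on {s1..s2} J" by (rule continuous_on_subset[OF Jcont]) (use s1 in auto)
    then obtain x where "s1 \<le> x" "x \<le> s2" "J x = y" using IVT'[of J s1 y s2] s1 s2 by auto
    thus ?thesis using s1 by force
  qed
  have bij: "bij_betw J {0..} {0..}"
    unfolding bij_betw_def
    using strict_mono_on_imp_inj_on[OF Jstrict0] Jnn surj by auto
  show ?thesis using smono lim0 liminf bij by (simp add: J_def)
qed

end



locale yfun =
  fixes A :: "real \<Rightarrow> ereal"
  assumes yf: "young_function A" and c2: "cond_C2 A"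
begin

definition a where "a t = real_of_ereal (A t)"

lemma A0: "A 0 = 0" using yf by (simp add: young_function_def)

lemma Aa: assumes "t \<ge> 0" shows "A t = ereal (a t)"
proof (cases "t = 0")
  case True thus ?thesis using A0 by (simp add: a_def)
next
  case False
  hence "0 < A t" "A t < \<infinity>" using c2 assms unfolding cond_C2_def by auto
  hence "\<bar>A t\<bar> \<noteq> \<infinity>" by auto
  thus ?thesis by (simp add: a_def ereal_real')
qed

lemma a0: "a 0 = 0" using A0 by (simp add: a_def)

lemma apos: "t > 0 \<Longrightarrow> a t > 0"
  using c2 Aa[of t] unfolding cond_C2_def by auto

lemma ann: "t \<ge> 0 \<Longrightarrow> a t \<ge> 0"
  using a0 apos by (cases "t = 0") (auto intro: less_imp_le)

lemma aconv: assumes "0 \<le> x" "0 \<le> y" "0 \<le> u" "u \<le> 1"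
  shows "a ((1-u)*x + u*y) \<le> (1-u) * a x + u * a y"
proof -
  have "A ((1-u)*x + u*y) \<le> ereal (1-u) * A x + ereal u * A y"
    using yf assms unfolding young_function_def by blast
  moreover have "(1-u)*x + u*y \<ge> 0" using assms by simp
  ultimately show ?thesis using assms by (simp add: Aa)
qed

lemma ascale: assumes "0 \<le> u" "u \<le> 1" "0 \<le> t" shows "a (u*t) \<le> u * a t"
  using aconv[of 0 t u] assms a0 by simp

lemma aratio: assumes "0 < s" "s \<le> t" shows "a s / s \<le> a t / t"
proof -
  have "a ((s/t)*t) \<le> (s/t) * a t" using assms by (intro ascale) auto
  thus ?thesis using assms by (simp add: field_simps)
qed

lemma amono: assumes "0 \<le> s" "s \<le> t" shows "a s \<le> a t"
proof -
  have "a ((s/t)*t) \<le> (s/t) * a t" if "t > 0" using assms that by (intro ascale) auto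
  moreover have "(s/t) * a t \<le> 1 * a t" if "t > 0" using assms that ann[of t]
    by (intro mult_right_mono) auto
  ultimately show ?thesis using assms by (cases "t = 0") auto
qed

lemma aconvex: "convex_on {0<..} a"
proof (rule convex_onI)
  fix t x y :: real assume "t > 0" "t < 1" "x \<in> {0<..}" "y \<in> {0<..}"
  thus "a ((1 - t) *\<^sub>R x + t *\<^sub>R y) \<le> (1 - t) * a x + t * a y"
    using aconv[of x y t] by simp
qed simp

lemma acont: "continuous_on {0<..} a"
  by (rule convex_on_continuous[OF _ aconvex]) simp


lemma ascale_strict:
  assumes small: "\<And>e. e>0 \<Longrightarrow> \<exists>d>0. \<forall>t. 0<t \<and> t<d \<longrightarrow> a t \<le> e*t"
  and l: "0<l" "l<1" and t: "0<t" shows "a (l*t) < l * a t"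
proof -
  define e where "e = a t / (2*t)"
  have at: "a t > 0" using apos t by simp
  have e: "e > 0" using at t by (simp add: e_def)
  obtain d where d: "d > 0" "\<And>x. 0<x \<Longrightarrow> x<d \<Longrightarrow> a x \<le> e*x" using small[OF e] by auto
  define r where "r = min (d/2) (l*t/2)"
  have r: "r > 0" "r < d" "r < l*t" "r < t" using d l t
    by (auto simp: r_def min_def) (smt (verit) mult_less_cancel_right2)+
  have ar: "a r \<le> e*r" using d r by simp
  define u where "u = (l*t - r)/(t - r)"
  have u: "0 \<le> u" "u \<le> 1" using r l t by (auto simp: u_def field_simps)
  have ut: "u*(t-r) = l*t - r" using r by (simp add: u_def)
  have eq: "(1-u)*r + u*t = l*t" using ut by (simp add: algebra_simps)
  have P: "0 < r*(t-r)*(1-l)" using r l by simp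
  have lt: "(1-l)*r/(2*(t-r)) < r*(1-l)/(t-r)" using r l
    by (simp add: field_simps) (use P in \<open>simp add: algebra_simps\<close>)
  have lu: "l - u = r*(1-l)/(t-r)" using r by (simp add: u_def field_simps)
  have lt2: "a t * ((1-l)*r/(2*(t-r))) < a t * (l - u)" unfolding lu
    by (rule mult_strict_left_mono[OF lt at])
  have "a (l*t) \<le> (1-u)*a r + u*a t" using aconv[of r t u] eq r t u by simp
  also have "(1-u)*a r \<le> (1-u)*(e*r)" using ar u by (intro mult_left_mono) auto
  also have "(1-u)*(e*r) = a t * ((1-l)*r/(2*(t-r)))" using r t
    by (simp add: u_def e_def field_simps)
  also note lt2
  finally show ?thesis by (simp add: algebra_simps)
qed

end



lemma case1:
  fixes A :: "real \<Rightarrow> ereal" and \<phi> :: "real \<Rightarrow> real"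
  assumes "young_function A" "cond_C2 A" "cond_C3 1 A" "gauge_function 1 \<phi>"
  shows "strict_mono_on {0<..} (J_fun 1 A \<phi>) \<and>
         (J_fun 1 A \<phi> \<longlongrightarrow> 0) (at_right 0) \<and>
         filterlim (J_fun 1 A \<phi>) at_top at_top \<and>
         bij_betw (J_fun 1 A \<phi>) {0..} {0..}"
proof -
  interpret yfun A using assms by unfold_locales
  have lim: "filterlim (\<lambda>t. t / a t) at_top (at_right 0)"
    using assms(3) by (simp add: cond_C3_def a_def)
  have small: "\<exists>d>0. \<forall>t. 0<t \<and> t<d \<longrightarrow> a t \<le> e*t" if e: "e > 0" for e
  proof -
    have "\<forall>\<^sub>F t in at_right 0. 1/e \<le> t / a t"
      using lim by (simp add: filterlim_at_top)
    then obtain d where d: "d > 0" "\<And>t. t > 0 \<Longrightarrow> t < d \<Longrightarrow> 1/e \<le> t / a t"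
      by (auto simp: eventually_at_right_field)
    have "a t \<le> e*t" if "0 < t" "t < d" for t
    proof -
      have "1/e \<le> t / a t" using d that by simp
      thus ?thesis using apos[of t] that e by (simp add: field_simps)
    qed
    thus ?thesis using d by auto
  qed
  interpret bfun 1 a
    by unfold_locales (auto simp: a0 apos acont intro: ascale_strict small)
  show ?thesis
    by (rule J_main) (use assms small in \<open>auto simp: B_fun_def Aa\<close>)
qed



lemma yc_ge: assumes "\<tau> \<ge> 0" shows "ereal (\<tau>*t) - H \<tau> \<le> young_conj H t"
  unfolding young_conj_def using assms by (intro SUP_upper) auto

lemma yc_le: assumes "\<And>\<tau>. \<tau> \<ge> 0 \<Longrightarrow> ereal (\<tau>*t) - H \<tau> \<le> y" shows "young_conj H t \<le> y"
  unfolding young_conj_def using assms by (intro SUP_least) auto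

lemma yc_real:
  assumes H: "\<And>\<tau>. \<tau> \<ge> 0 \<Longrightarrow> H \<tau> = ereal (h \<tau>)"
    and K: "\<And>\<tau>. \<tau> \<ge> 0 \<Longrightarrow> \<tau>*t - h \<tau> \<le> K"
  shows "young_conj H t = ereal (real_of_ereal (young_conj H t))"
    "\<And>\<tau>. \<tau> \<ge> 0 \<Longrightarrow> \<tau>*t - h \<tau> \<le> real_of_ereal (young_conj H t)"
    "\<And>y. (\<And>\<tau>. \<tau> \<ge> 0 \<Longrightarrow> \<tau>*t - h \<tau> \<le> y) \<Longrightarrow> real_of_ereal (young_conj H t) \<le> y"
proof -
  have lo: "ereal (\<tau>*t - h \<tau>) \<le> young_conj H t" if "\<tau> \<ge> 0" for \<tau>
    using yc_ge[OF that, of t H] H[OF that] by simp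
  have up: "young_conj H t \<le> ereal y" if "\<And>\<tau>. \<tau> \<ge> 0 \<Longrightarrow> \<tau>*t - h \<tau> \<le> y" for y
    by (rule yc_le) (use that H in auto)
  have fin: "\<bar>young_conj H t\<bar> \<noteq> \<infinity>"
    using lo[of 0] up[of K] K by auto
  show eq: "young_conj H t = ereal (real_of_ereal (young_conj H t))"
    using fin by (simp add: ereal_real')
  show "\<tau>*t - h \<tau> \<le> real_of_ereal (young_conj H t)" if "\<tau> \<ge> 0" for \<tau>
    using lo[OF that] eq by (metis ereal_less_eq(3))
  show "real_of_ereal (young_conj H t) \<le> y" if "\<And>\<tau>. \<tau> \<ge> 0 \<Longrightarrow> \<tau>*t - h \<tau> \<le> y" for y
    using up[OF that] eq by (metis ereal_less_eq(3))
qed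

lemma emeasure_Ici_inf: "emeasure lborel {t0::real..} = \<infinity>"
proof (rule ccontr)
  assume "emeasure lborel {t0..} \<noteq> \<infinity>"
  then obtain r where r: "emeasure lborel {t0..} = ennreal r" "r \<ge> 0"
    by (cases "emeasure lborel {t0..}") auto
  have "emeasure lborel {t0..t0+r+1} \<le> emeasure lborel {t0..}"
    by (rule emeasure_mono) auto
  thus False using r by simp
qed

lemma tail_powr:
  assumes m: "m > 0" and r: "r > 1"
  shows "(\<integral>\<^sup>+ s. ennreal (s powr (-r)) * indicator {m..} s \<partial>lborel) = ennreal (m powr (1-r) / (r-1))"
proof -
  have "((\<lambda>x. x powr (-r)) has_integral -(m powr (-r+1)) / (-r+1)) {m..}"
    using r m by (intro has_integral_powr_to_inf) auto
  hence "(\<integral>\<^sup>+ s. ennreal (s powr (-r)) * indicator {m..} s \<partial>lborel) = ennreal (-(m powr (-r+1)) / (-r+1))"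
    by (intro nn_integral_has_integral_lebesgue') auto
  also have "-(m powr (-r+1)) / (-r+1) = m powr (1-r) / (r-1)"
    using r by (simp add: field_simps)
  finally show ?thesis .
qed

locale ycase2 = yfun +
  fixes n :: nat
  assumes n2: "n \<ge> 2" and c1: "cond_C1 n A" and c3: "cond_C3 n A"
begin

definition p where "p = holder_conj n"
definition q where "q = 1 / (real n - 1)"

lemma pq: "p = 1 + q" "q > 0" "p > 1" "q * (real n - 1) = 1"
  using n2 by (auto simp: p_def q_def holder_conj_def field_simps)

lemma c1': obtains t0 where "t0 > 0"
  "(\<integral>\<^sup>+ t\<in>{t0..}. ennreal ((t / a t) powr q) \<partial>lborel) < \<infinity>"
  using c1 n2 unfolding cond_C1_def by (auto simp: a_def q_def)

lemma c3': "t0 > 0 \<Longrightarrow> (\<integral>\<^sup>+ t\<in>{0<..t0}. ennreal ((t / a t) powr q) \<partial>lborel) = \<infinity>"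
  using c3 n2 unfolding cond_C3_def by (auto simp: a_def q_def)

lemma asmall: assumes e: "e > 0" shows "\<exists>d>0. \<forall>t. 0<t \<and> t<d \<longrightarrow> a t \<le> e*t"
proof (rule ccontr)
  assume "\<not> ?thesis"
  hence H: "\<forall>d>0. \<exists>t. 0<t \<and> t<d \<and> a t > e*t" by (auto simp: not_le)
  have big: "a t > e*t" if t: "t > 0" for t
  proof -
    obtain t' where t': "0<t'" "t'<t" "a t' > e*t'" using H t by blast
    have "e < a t' / t'" using t' by (simp add: field_simps)
    also have "\<dots> \<le> a t / t" using t' by (intro aratio) auto
    finally show ?thesis using t by (simp add: field_simps)
  qed
  have "(\<integral>\<^sup>+ t\<in>{0<..1}. ennreal ((t / a t) powr q) \<partial>lborel)
        \<le> (\<integral>\<^sup>+ t. ennreal ((1/e) powr q) * indicator {0<..1::real} t \<partial>lborel)"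
  proof (rule nn_integral_mono)
    fix t :: real
    show "ennreal ((t / a t) powr q) * indicator {0<..1} t \<le> ennreal ((1/e) powr q) * indicator {0<..1} t"
    proof (cases "t \<in> {0<..1}")
      case True
      hence "t / a t \<le> 1/e" using big[of t] apos[of t] e by (simp add: field_simps)
      hence "(t / a t) powr q \<le> (1/e) powr q" using pq True apos[of t]
        by (intro powr_mono2) auto
      thus ?thesis using True by (simp add: ennreal_leI)
    qed simp
  qed
  also have "\<dots> < \<infinity>" by (simp add: nn_integral_cmult_indicator ennreal_mult_less_top)
  finally show False using c3'[of 1] by simp
qed

lemma abig: "\<exists>T>0. \<forall>t\<ge>T. a t \<ge> M*t"
proof (rule ccontr)
  assume "\<not> ?thesis"
  hence H: "\<forall>T>0. \<exists>t\<ge>T. a t < M*t" by (auto simp: not_le)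
  have small: "a t < M*t" if t: "t > 0" for t
  proof -
    obtain t' where t': "t' \<ge> t" "a t' < M*t'" using H t by blast
    have "a t / t \<le> a t' / t'" using t' t by (intro aratio) auto
    also have "\<dots> < M" using t' t by (simp add: field_simps)
    finally show ?thesis using t by (simp add: field_simps)
  qed
  have M: "M > 0" using small[of 1] ann[of 1] by simp
  obtain t0 where t0: "t0 > 0" "(\<integral>\<^sup>+ t\<in>{t0..}. ennreal ((t / a t) powr q) \<partial>lborel) < \<infinity>"
    by (rule c1')
  have "(\<integral>\<^sup>+ t. ennreal ((1/M) powr q) * indicator {t0..} t \<partial>lborel)
        \<le> (\<integral>\<^sup>+ t\<in>{t0..}. ennreal ((t / a t) powr q) \<partial>lborel)"
  proof (rule nn_integral_mono)
    fix t :: real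
    show "ennreal ((1/M) powr q) * indicator {t0..} t \<le> ennreal ((t / a t) powr q) * indicator {t0..} t"
    proof (cases "t \<in> {t0..}")
      case True
      hence tp: "t > 0" using t0 by auto
      hence "1/M \<le> t / a t" using small[of t] apos[of t] M by (simp add: field_simps)
      hence "(1/M) powr q \<le> (t / a t) powr q" using pq M
        by (intro powr_mono2) auto
      thus ?thesis using True by (simp add: ennreal_leI)
    qed simp
  qed
  moreover have "(\<integral>\<^sup>+ t. ennreal ((1/M) powr q) * indicator {t0..} t \<partial>lborel) = \<infinity>"
    using M by (simp add: nn_integral_cmult_indicator ennreal_mult_top emeasure_Ici_inf)
  ultimately show False using t0 by simp
qed


definition C where "C = young_conj A"
definition c where "c s = real_of_ereal (C s)"

lemma c_basic: "C s = ereal (c s)" "\<And>\<tau>. \<tau> \<ge> 0 \<Longrightarrow> \<tau>* s - a \<tau> \<le> c s"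
  "\<And>y. (\<And>\<tau>. \<tau> \<ge> 0 \<Longrightarrow> \<tau>* s - a \<tau> \<le> y) \<Longrightarrow> c s \<le> y"
proof -
  obtain T where T: "T > 0" "\<And>t. t \<ge> T \<Longrightarrow> a t \<ge> (\<bar>s\<bar>+1)*t" using abig by blast
  have K: "\<tau>* s - a \<tau> \<le> T*\<bar>s\<bar>" if "\<tau> \<ge> 0" for \<tau>
  proof (cases "\<tau> \<ge> T")
    case True
    hence 1: "\<tau> * s - a \<tau> \<le> \<tau> * s - (\<bar>s\<bar>+1)*\<tau>" using T by simp
    have 2: "\<tau> * s \<le> \<tau> * \<bar>s\<bar>" using that by (intro mult_left_mono) auto
    have 3: "(\<bar>s\<bar>+1)*\<tau> = \<tau> * \<bar>s\<bar> + \<tau>" by (simp add: algebra_simps)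
    have "\<tau> * s - a \<tau> \<le> 0" using 1 2 3 that by linarith
    thus ?thesis using T mult_nonneg_nonneg[of T "\<bar>s\<bar>"] by linarith
  next
    case False
    have "\<tau>* s \<le> \<tau>*\<bar>s\<bar>" using that by (intro mult_left_mono) auto
    also have "\<dots> \<le> T*\<bar>s\<bar>" using False by (intro mult_right_mono) auto
    finally show ?thesis using ann[OF that] by simp
  qed
  have H1: "\<And>\<tau>. \<tau> \<ge> 0 \<Longrightarrow> A \<tau> = ereal (a \<tau>)" by (rule Aa)
  note yc = yc_real[where H=A and h=a and t=s and K="T*\<bar>s\<bar>", OF H1 K]
  show "C s = ereal (c s)" using yc(1) by (simp add: C_def c_def)
  show "\<tau>* s - a \<tau> \<le> c s" if "\<tau> \<ge> 0" for \<tau> unfolding C_def c_def by (rule yc(2)) (use that in auto)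
  show "c s \<le> y" if "\<And>\<tau>. \<tau> \<ge> 0 \<Longrightarrow> \<tau>* s - a \<tau> \<le> y" for y
    unfolding C_def c_def by (rule yc(3)) (use that in auto)
qed

lemma c_nonneg: "c s \<ge> 0" using c_basic(2)[of 0 s] a0 by simp

lemma c_neg: assumes "s \<le> 0" shows "c s = 0"
proof -
  have "c s \<le> 0"
  proof (rule c_basic(3))
    fix \<tau> :: real assume "\<tau> \<ge> 0"
    thus "\<tau> * s - a \<tau> \<le> 0" using ann[of \<tau>] mult_nonneg_nonpos[of \<tau> s] assms by linarith
  qed
  thus ?thesis using c_nonneg[of s] by simp
qed

lemma c_mono: "s \<le> s' \<Longrightarrow> c s \<le> c s'"
proof (rule c_basic(3))
  fix \<tau> :: real assume "s \<le> s'" "\<tau> \<ge> 0"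
  hence "\<tau>* s \<le> \<tau>* s'" by (intro mult_left_mono)
  thus "\<tau>* s - a \<tau> \<le> c s'" using c_basic(2)[of \<tau> s'] \<open>\<tau> \<ge> 0\<close> by simp
qed

lemma c_monoI: "mono c" by (auto intro: monoI c_mono)

lemma c_meas[measurable]: "c \<in> borel_measurable borel"
  using c_monoI by (rule borel_measurable_mono)

lemma c_scale: assumes "0 \<le> u" "u \<le> 1" shows "c (u* s) \<le> u * c s"
proof (rule c_basic(3))
  fix \<tau> :: real assume t: "\<tau> \<ge> 0"
  have "\<tau>*(u* s) - a \<tau> = u*(\<tau>* s - a \<tau>) - (1-u)*a \<tau>" by (simp add: algebra_simps)
  also have "\<dots> \<le> u*(\<tau>* s - a \<tau>)" using assms ann[OF t] by simp
  also have "\<dots> \<le> u * c s" using assms c_basic(2)[OF t, of s] by (intro mult_left_mono) auto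
  finally show "\<tau>*(u* s) - a \<tau> \<le> u * c s" .
qed

lemma c_pos: assumes s: "s > 0" shows "c s > 0"
proof -
  obtain d where d: "d > 0" "\<And>t. 0<t \<Longrightarrow> t<d \<Longrightarrow> a t \<le> (s/2)*t" using asmall[of "s/2"] s by auto
  have "a (d/2) \<le> (s/2)*(d/2)" using d(2)[of "d/2"] d by simp
  hence "(d/2)* s - (s/2)*(d/2) \<le> (d/2)* s - a (d/2)" by linarith
  moreover have "(d/2)* s - (s/2)*(d/2) = d * s/4" by simp
  moreover have "d * s/4 > 0" using d s by simp
  ultimately have "0 < (d/2)* s - a (d/2)" by linarith
  also have "\<dots> \<le> c s" using d by (intro c_basic(2)) auto
  finally show ?thesis .
qed

lemma c_small: assumes e: "e > 0" shows "\<exists>\<sigma>>0. \<forall>s. 0 \<le> s \<and> s \<le> \<sigma> \<longrightarrow> c s \<le> e* s"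
proof (intro exI[of _ "a e / e"] conjI allI impI)
  show "a e / e > 0" using apos[OF e] e by simp
  fix s assume s: "0 \<le> s \<and> s \<le> a e / e"
  show "c s \<le> e* s"
  proof (rule c_basic(3))
    fix \<tau> :: real assume t: "\<tau> \<ge> 0"
    show "\<tau>* s - a \<tau> \<le> e* s"
    proof (cases "\<tau> \<ge> e")
      case True
      have "s \<le> a e / e" using s by simp
      also have "\<dots> \<le> a \<tau> / \<tau>" using True e by (intro aratio) auto
      finally have "\<tau>* s \<le> a \<tau>" using True e by (simp add: field_simps)
      thus ?thesis using s e mult_nonneg_nonneg[of e s] by linarith
    next
      case False
      have "\<tau>* s \<le> e* s" using False s by (intro mult_right_mono) auto
      thus ?thesis using ann[OF t] by simp
    qed
  qed
qed

definition a' where "a' t = a (max 0 t)"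

lemma a'_meas[measurable]: "a' \<in> borel_measurable borel"
  by (rule borel_measurable_mono) (auto intro!: monoI amono simp: a'_def)

lemma a'_eq: "t \<ge> 0 \<Longrightarrow> a' t = a t" by (simp add: a'_def)


definition g where "g s = ennreal (c s) * ennreal (s powr (-1-p))"

lemma g_meas[measurable]: "g \<in> borel_measurable borel"
  unfolding g_def by measurable

definition F where "F t = (\<integral>\<^sup>+ s. g s * indicator {t..} s \<partial>lborel)"

lemma E_eq: "E_fun n A t = enn2ereal (ennreal (t powr p) * F t)"
  unfolding E_fun_def F_def g_def p_def using c_basic(1) by (simp add: C_def)

lemma F_split: assumes "x \<le> y"
  shows "F x = (\<integral>\<^sup>+ s. g s * indicator {x..<y} s \<partial>lborel) + F y"
proof -
  have "F x = (\<integral>\<^sup>+ s. g s * indicator {x..<y} s + g s * indicator {y..} s \<partial>lborel)"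
    unfolding F_def using assms
    by (intro nn_integral_cong) (auto split: split_indicator simp: not_le)
  also have "\<dots> = (\<integral>\<^sup>+ s. g s * indicator {x..<y} s \<partial>lborel) + F y"
    unfolding F_def by (rule nn_integral_add) auto
  finally show ?thesis .
qed

lemma F_anti: "x \<le> y \<Longrightarrow> F y \<le> F x"
  using F_split[of x y] by simp

lemma Rbound: assumes s: "s > 0"
  shows "ennreal (c s) \<le> ennreal s * emeasure lborel {\<tau>. 0 \<le> \<tau> \<and> a' \<tau> < s * \<tau>}"
proof (cases "emeasure lborel {\<tau>. 0 \<le> \<tau> \<and> a' \<tau> < s * \<tau>}")
  case (real r)
  have "c s \<le> s * r"
  proof (rule c_basic(3))
    fix \<tau> :: real assume t: "\<tau> \<ge> 0"
    show "\<tau> * s - a \<tau> \<le> s * r"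
    proof (cases "a \<tau> < s * \<tau>")
      case True
      have sub: "{0<..<\<tau>} \<subseteq> {\<tau>. 0 \<le> \<tau> \<and> a' \<tau> < s * \<tau>}"
      proof
        fix x assume x: "x \<in> {0<..<\<tau>}"
        have "a x / x \<le> a \<tau> / \<tau>" using x by (intro aratio) auto
        also have "\<dots> < s" using True x by (simp add: field_simps)
        finally show "x \<in> {\<tau>. 0 \<le> \<tau> \<and> a' \<tau> < s * \<tau>}" using x by (simp add: a'_eq field_simps)
      qed
      have meas: "{\<tau>. 0 \<le> \<tau> \<and> a' \<tau> < s * \<tau>} \<in> sets lborel" by measurable
      have "ennreal \<tau> = emeasure lborel {0<..<\<tau>}" using t by simp
      also have "\<dots> \<le> ennreal r" using emeasure_mono[OF sub meas] real by simp
      finally have "\<tau> \<le> r" using real by (simp add: ennreal_le_iff)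
      hence "\<tau> * s \<le> s * r" using s by (simp add: mult.commute)
      thus ?thesis using ann[OF t] by simp
    next
      case False
      have "0 \<le> s * r" using real s by simp
      thus ?thesis using False by (simp add: mult.commute)
    qed
  qed
  hence "ennreal (c s) \<le> ennreal (s * r)" by (rule ennreal_leI)
  thus ?thesis using real s by (simp add: ennreal_mult)
next
  case top
  thus ?thesis using s by (simp add: ennreal_mult_top)
qed


lemma spow: "s > 0 \<Longrightarrow> ennreal s * ennreal (s powr (-1-p)) = ennreal (s powr (-p))"
proof -
  assume s: "s > 0"
  have "s * s powr (-1-p) = s powr (-p)" using powr_add[of s 1 "-1-p"] s by simp
  thus ?thesis using s by (simp add: ennreal_mult[symmetric])
qed

lemma F1_fin: "F 1 < \<infinity>"
proof -
  obtain t0 where t0: "t0 > 0" "(\<integral>\<^sup>+ t\<in>{t0..}. ennreal ((t / a t) powr q) \<partial>lborel) < \<infinity>"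
    by (rule c1')
  define Hf :: "real \<times> real \<Rightarrow> ennreal" where
    "Hf x = (if 0 \<le> fst x \<and> a' (fst x) < snd x * fst x \<and> 1 \<le> snd x then ennreal (snd x powr (-p)) else 0)" for x
  have Hm: "Hf \<in> borel_measurable (lborel \<Otimes>\<^sub>M lborel)" unfolding Hf_def by measurable
  have stepB: "F 1 \<le> (\<integral>\<^sup>+ s. (\<integral>\<^sup>+ \<tau>. Hf (\<tau>, s) \<partial>lborel) \<partial>lborel)"
    unfolding F_def
  proof (rule nn_integral_mono)
    fix s :: real
    show "g s * indicator {1..} s \<le> (\<integral>\<^sup>+ \<tau>. Hf (\<tau>, s) \<partial>lborel)"
    proof (cases "1 \<le> s")
      case True
      have meas: "{\<tau>. 0 \<le> \<tau> \<and> a' \<tau> < s * \<tau>} \<in> sets lborel" by measurable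
      have "(\<integral>\<^sup>+ \<tau>. Hf (\<tau>, s) \<partial>lborel) = (\<integral>\<^sup>+ \<tau>. ennreal (s powr (-p)) * indicator {\<tau>. 0 \<le> \<tau> \<and> a' \<tau> < s * \<tau>} \<tau> \<partial>lborel)"
        using True by (intro nn_integral_cong) (auto simp: Hf_def split: split_indicator)
      also have "\<dots> = ennreal (s powr (-p)) * emeasure lborel {\<tau>. 0 \<le> \<tau> \<and> a' \<tau> < s * \<tau>}"
        using meas by (rule nn_integral_cmult_indicator)
      finally have eq: "(\<integral>\<^sup>+ \<tau>. Hf (\<tau>, s) \<partial>lborel) = \<dots>" .
      have "g s * indicator {1..} s = ennreal (c s) * ennreal (s powr (-1-p))"
        using True by (simp add: g_def)
      also have "\<dots> \<le> (ennreal s * emeasure lborel {\<tau>. 0 \<le> \<tau> \<and> a' \<tau> < s * \<tau>}) * ennreal (s powr (-1-p))"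
        using True by (intro mult_right_mono Rbound) auto
      also have "\<dots> = (ennreal s * ennreal (s powr (-1-p))) * emeasure lborel {\<tau>. 0 \<le> \<tau> \<and> a' \<tau> < s * \<tau>}"
        by (simp add: mult_ac)
      also have "\<dots> = ennreal (s powr (-p)) * emeasure lborel {\<tau>. 0 \<le> \<tau> \<and> a' \<tau> < s * \<tau>}"
        using True by (simp add: spow)
      finally show ?thesis using eq by simp
    qed simp
  qed
  have stepC: "(\<integral>\<^sup>+ s. (\<integral>\<^sup>+ \<tau>. Hf (\<tau>, s) \<partial>lborel) \<partial>lborel) = (\<integral>\<^sup>+ \<tau>. (\<integral>\<^sup>+ s. Hf (\<tau>, s) \<partial>lborel) \<partial>lborel)"
    by (rule lborel_pair.Fubini') (use Hm in \<open>simp add: case_prod_eta\<close>)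
  define Gb where "Gb \<tau> = ennreal (real n - 1) * (indicator {0..t0} \<tau> + ennreal ((\<tau> / a' \<tau>) powr q) * indicator {t0..} \<tau>)" for \<tau> :: real
  have stepD: "(\<integral>\<^sup>+ s. Hf (\<tau>, s) \<partial>lborel) \<le> Gb \<tau>" for \<tau>
  proof (cases "\<tau> > 0")
    case False
    have "Hf (\<tau>, s) = 0" for s using False a0 by (auto simp: Hf_def a'_def)
    thus ?thesis by simp
  next
    case True
    define m where "m = max 1 (a \<tau> / \<tau>)"
    have m: "m \<ge> 1" "m \<ge> a \<tau> / \<tau>" by (auto simp: m_def)
    have "(\<integral>\<^sup>+ s. Hf (\<tau>, s) \<partial>lborel) \<le> (\<integral>\<^sup>+ s. ennreal (s powr (-p)) * indicator {m..} s \<partial>lborel)"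
    proof (rule nn_integral_mono)
      fix s :: real
      show "Hf (\<tau>, s) \<le> ennreal (s powr (-p)) * indicator {m..} s"
      proof (cases "0 \<le> \<tau> \<and> a' \<tau> < s * \<tau> \<and> 1 \<le> s")
        case True
        hence "a \<tau> / \<tau> < s" using \<open>\<tau> > 0\<close> by (simp add: a'_eq field_simps)
        hence "s \<ge> m" using True by (simp add: m_def)
        thus ?thesis using True by (simp add: Hf_def)
      qed (auto simp: Hf_def)
    qed
    also have "\<dots> = ennreal (m powr (1-p) / (p-1))" using m pq by (intro tail_powr) auto
    also have "m powr (1-p) / (p-1) = (real n - 1) * m powr (1-p)"
    proof -
      have pinv: "1/(p-1) = real n - 1" using pq by (auto simp: field_simps)
      show ?thesis by (subst pinv[symmetric]) simp
    qed
    also have "ennreal ((real n - 1) * m powr (1-p)) \<le> Gb \<tau>"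
    proof -
      have n1: "real n - 1 \<ge> 0" using n2 by simp
      have mle1: "m powr (1-p) \<le> 1"
        using powr_mono2'[of "1-p" 1 m] m pq by simp
      have ap: "a \<tau> > 0" using apos True by simp
      have mle2: "m powr (1-p) \<le> (\<tau> / a \<tau>) powr q"
      proof -
        have "m powr (1-p) \<le> (a \<tau> / \<tau>) powr (1-p)"
          using powr_mono2'[of "1-p" "a \<tau> / \<tau>" m] m pq ap True by simp
        also have "(a \<tau> / \<tau>) powr (1-p) = (\<tau> / a \<tau>) powr q"
          using pq ap True by (simp add: powr_divide powr_minus_divide)
        finally show ?thesis .
      qed
      show ?thesis
      proof (cases "\<tau> \<le> t0")
        case le: True
        have "ennreal ((real n - 1) * m powr (1-p)) \<le> ennreal ((real n - 1) * 1)"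
          using mle1 n1 by (intro ennreal_leI mult_left_mono) auto
        also have "\<dots> = ennreal (real n - 1) * indicator {0..t0} \<tau>" using le True by simp
        also have "\<dots> \<le> Gb \<tau>" unfolding Gb_def by (intro mult_left_mono) auto
        finally show ?thesis .
      next
        case gt: False
        have "ennreal ((real n - 1) * m powr (1-p)) \<le> ennreal ((real n - 1) * (\<tau> / a \<tau>) powr q)"
          using mle2 n1 by (intro ennreal_leI mult_left_mono) auto
        also have "\<dots> = ennreal (real n - 1) * (ennreal ((\<tau> / a' \<tau>) powr q) * indicator {t0..} \<tau>)"
          using gt True n1 by (simp add: a'_eq ennreal_mult)
        also have "\<dots> \<le> Gb \<tau>" unfolding Gb_def by (intro mult_left_mono) auto
        finally show ?thesis .
      qed
    qed
    finally show ?thesis .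
  qed
  have stepE: "(\<integral>\<^sup>+ \<tau>. Gb \<tau> \<partial>lborel) < \<infinity>"
  proof -
    have "(\<integral>\<^sup>+ \<tau>. Gb \<tau> \<partial>lborel) = ennreal (real n - 1) *
       ((\<integral>\<^sup>+ \<tau>. indicator {0..t0} \<tau> \<partial>lborel) + (\<integral>\<^sup>+ \<tau>. ennreal ((\<tau> / a' \<tau>) powr q) * indicator {t0..} \<tau> \<partial>lborel))"
      unfolding Gb_def by (subst nn_integral_cmult) (measurable, subst nn_integral_add, auto)
    also have "(\<integral>\<^sup>+ \<tau>. ennreal ((\<tau> / a' \<tau>) powr q) * indicator {t0..} \<tau> \<partial>lborel)
        = (\<integral>\<^sup>+ t\<in>{t0..}. ennreal ((t / a t) powr q) \<partial>lborel)"
      using t0 by (intro nn_integral_cong) (auto split: split_indicator simp: a'_eq)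
    finally show ?thesis using t0 by (simp add: ennreal_mult_less_top)
  qed
  have "F 1 \<le> (\<integral>\<^sup>+ \<tau>. Gb \<tau> \<partial>lborel)"
    using stepB stepC stepD by (metis (no_types, lifting) nn_integral_mono order_trans)
  thus ?thesis using stepE by simp
qed


lemma Rbound2: assumes s: "s > 0"
  shows "ennreal (s/2) * emeasure lborel {\<tau>. 0 < \<tau> \<and> 2 * a' \<tau> \<le> s * \<tau>} \<le> ennreal (c s)"
proof -
  have sub: "{\<tau>. 0 < \<tau> \<and> 2 * a' \<tau> \<le> s * \<tau>} \<subseteq> {0..2 * c s / s}"
  proof
    fix \<tau> assume t: "\<tau> \<in> {\<tau>. 0 < \<tau> \<and> 2 * a' \<tau> \<le> s * \<tau>}"
    hence t1: "\<tau> > 0" "2 * a \<tau> \<le> s * \<tau>" by (auto simp: a'_eq)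
    have "\<tau> * s - a \<tau> \<le> c s" using t1 by (intro c_basic(2)) auto
    hence "\<tau> * s \<le> 2 * c s" using t1 by (simp add: algebra_simps)
    thus "\<tau> \<in> {0..2 * c s / s}" using t1 s by (simp add: field_simps)
  qed
  have "emeasure lborel {\<tau>. 0 < \<tau> \<and> 2 * a' \<tau> \<le> s * \<tau>} \<le> emeasure lborel {0..2 * c s / s}"
    by (rule emeasure_mono[OF sub]) simp
  also have "\<dots> = ennreal (2 * c s / s)" using s c_nonneg[of s] by simp
  finally have "ennreal (s/2) * emeasure lborel {\<tau>. 0 < \<tau> \<and> 2 * a' \<tau> \<le> s * \<tau>} \<le> ennreal (s/2) * ennreal (2 * c s / s)"
    by (rule mult_left_mono) simp
  also have "\<dots> = ennreal (c s)" using s c_nonneg[of s] by (simp add: ennreal_mult[symmetric])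
  finally show ?thesis .
qed

lemma G_inf: "(\<integral>\<^sup>+ s. g s * indicator {0<..1} s \<partial>lborel) = \<infinity>"
proof -
  obtain d where d: "d > 0" "\<And>t. 0<t \<Longrightarrow> t<d \<Longrightarrow> a t \<le> (1/4)*t" using asmall[of "1/4"] by auto
  define \<delta> where "\<delta> = d/2"
  have \<delta>1: "\<delta> > 0" using d by (simp add: \<delta>_def)
  have \<delta>2: "4 * a t \<le> t" if "0<t" "t \<le> \<delta>" for t
  proof -
    have "t < d" using that d(1) by (simp add: \<delta>_def)
    thus ?thesis using d(2)[of t] that by simp
  qed
  note \<delta> = \<delta>1 \<delta>2
  define Hg :: "real \<times> real \<Rightarrow> ennreal" where
    "Hg x = (if 0 < fst x \<and> 2 * a' (fst x) \<le> snd x * fst x \<and> 0 < snd x \<and> snd x \<le> 1 then ennreal (snd x powr (-p) / 2) else 0)" for x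
  have Hm: "Hg \<in> borel_measurable (lborel \<Otimes>\<^sub>M lborel)" unfolding Hg_def by measurable
  have stepB: "(\<integral>\<^sup>+ s. (\<integral>\<^sup>+ \<tau>. Hg (\<tau>, s) \<partial>lborel) \<partial>lborel) \<le> (\<integral>\<^sup>+ s. g s * indicator {0<..1} s \<partial>lborel)"
  proof (rule nn_integral_mono)
    fix s :: real
    show "(\<integral>\<^sup>+ \<tau>. Hg (\<tau>, s) \<partial>lborel) \<le> g s * indicator {0<..1} s"
    proof (cases "s \<in> {0<..1}")
      case True
      let ?R = "emeasure lborel {\<tau>. 0 < \<tau> \<and> 2 * a' \<tau> \<le> s * \<tau>}"
      have meas: "{\<tau>. 0 < \<tau> \<and> 2 * a' \<tau> \<le> s * \<tau>} \<in> sets lborel" by measurable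
      have "(\<integral>\<^sup>+ \<tau>. Hg (\<tau>, s) \<partial>lborel) = (\<integral>\<^sup>+ \<tau>. ennreal (s powr (-p) / 2) * indicator {\<tau>. 0 < \<tau> \<and> 2 * a' \<tau> \<le> s * \<tau>} \<tau> \<partial>lborel)"
        using True by (intro nn_integral_cong) (auto simp: Hg_def split: split_indicator)
      also have "\<dots> = ennreal (s powr (-p) / 2) * ?R"
        using meas by (rule nn_integral_cmult_indicator)
      also have "ennreal (s powr (-p) / 2) = ennreal (s/2) * ennreal (s powr (-1-p))"
      proof -
        have "s * s powr (-1-p) = s powr (-p)" using powr_add[of s 1 "-1-p"] True by simp
        thus ?thesis using True by (simp add: ennreal_mult[symmetric])
      qed
      also have "ennreal (s/2) * ennreal (s powr (-1-p)) * ?R = (ennreal (s/2) * ?R) * ennreal (s powr (-1-p))"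
        by (simp add: mult_ac)
      also have "\<dots> \<le> ennreal (c s) * ennreal (s powr (-1-p))"
        using True by (intro mult_right_mono Rbound2) auto
      also have "\<dots> = g s * indicator {0<..1} s" using True by (simp add: g_def)
      finally show ?thesis .
    qed (auto simp: Hg_def)
  qed
  have stepC: "(\<integral>\<^sup>+ s. (\<integral>\<^sup>+ \<tau>. Hg (\<tau>, s) \<partial>lborel) \<partial>lborel) = (\<integral>\<^sup>+ \<tau>. (\<integral>\<^sup>+ s. Hg (\<tau>, s) \<partial>lborel) \<partial>lborel)"
    by (rule lborel_pair.Fubini') (use Hm in \<open>simp add: case_prod_eta\<close>)
  define \<kappa> where "\<kappa> = 2 powr (-p-q) / 2"
  have \<kappa>: "\<kappa> > 0" by (simp add: \<kappa>_def)
  have stepD: "ennreal \<kappa> * (ennreal ((\<tau> / a' \<tau>) powr q) * indicator {0<..\<delta>} \<tau>) \<le> (\<integral>\<^sup>+ s. Hg (\<tau>, s) \<partial>lborel)" for \<tau>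
  proof (cases "\<tau> \<in> {0<..\<delta>}")
    case True
    have tp: "\<tau> > 0" using True by simp
    have ap: "a \<tau> > 0" using apos tp by simp
    define m where "m = 2 * a \<tau> / \<tau>"
    have m: "m > 0" "2 * m \<le> 1" using ap tp \<delta>(2)[of \<tau>] True by (auto simp: m_def field_simps)
    have "(\<integral>\<^sup>+ s. ennreal ((2*m) powr (-p) / 2) * indicator {m..2*m} s \<partial>lborel) \<le> (\<integral>\<^sup>+ s. Hg (\<tau>, s) \<partial>lborel)"
    proof (rule nn_integral_mono)
      fix s :: real
      show "ennreal ((2*m) powr (-p) / 2) * indicator {m..2*m} s \<le> Hg (\<tau>, s)"
      proof (cases "s \<in> {m..2*m}")
        case sT: True
        have "2 * a \<tau> \<le> s * \<tau>" using sT tp by (simp add: m_def field_simps)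
        moreover have "(2*m) powr (-p) \<le> s powr (-p)"
          using sT m pq by (intro powr_mono2') auto
        ultimately show ?thesis using sT m tp by (auto simp: Hg_def a'_eq intro!: ennreal_leI)
      qed simp
    qed
    moreover have "(\<integral>\<^sup>+ s. ennreal ((2*m) powr (-p) / 2) * indicator {m..2*m} s \<partial>lborel) = ennreal ((2*m) powr (-p) / 2 * m)"
      using m by (simp add: nn_integral_cmult_indicator ennreal_mult[symmetric])
    moreover have "(2*m) powr (-p) / 2 * m = \<kappa> * (\<tau> / a \<tau>) powr q"
    proof -
      have "(2*m) powr (-p) * m = 2 powr (-p) * (m powr (-p) * m)" using m by (simp add: powr_mult)
      also have "m powr (-p) * m = m powr (-q)" using powr_add[of m "-p" 1] m pq by simp
      also have "m powr (-q) = 2 powr (-q) * (\<tau> / a \<tau>) powr q"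
        using ap tp unfolding m_def by (simp add: powr_minus_divide powr_divide powr_mult field_simps)
      finally have "(2*m) powr (-p) * m = 2 powr (-p) * 2 powr (-q) * (\<tau> / a \<tau>) powr q" by simp
      also have "2 powr (-p) * 2 powr (-q) = (2::real) powr (-p-q)" by (simp add: powr_add[symmetric])
      finally show ?thesis by (simp add: \<kappa>_def)
    qed
    ultimately have "ennreal (\<kappa> * (\<tau> / a \<tau>) powr q) \<le> (\<integral>\<^sup>+ s. Hg (\<tau>, s) \<partial>lborel)" by simp
    thus ?thesis using True \<kappa> by (simp add: a'_eq ennreal_mult)
  qed simp
  have "(\<integral>\<^sup>+ \<tau>. ennreal \<kappa> * (ennreal ((\<tau> / a' \<tau>) powr q) * indicator {0<..\<delta>} \<tau>) \<partial>lborel)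
      = ennreal \<kappa> * (\<integral>\<^sup>+ \<tau>. ennreal ((\<tau> / a' \<tau>) powr q) * indicator {0<..\<delta>} \<tau> \<partial>lborel)"
    by (rule nn_integral_cmult) measurable
  also have "(\<integral>\<^sup>+ \<tau>. ennreal ((\<tau> / a' \<tau>) powr q) * indicator {0<..\<delta>} \<tau> \<partial>lborel)
      = (\<integral>\<^sup>+ t\<in>{0<..\<delta>}. ennreal ((t / a t) powr q) \<partial>lborel)"
    by (intro nn_integral_cong) (auto split: split_indicator simp: a'_eq)
  also have "\<dots> = \<infinity>" using c3' \<delta> by simp
  finally have inf: "(\<integral>\<^sup>+ \<tau>. ennreal \<kappa> * (ennreal ((\<tau> / a' \<tau>) powr q) * indicator {0<..\<delta>} \<tau>) \<partial>lborel) = \<infinity>"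
    using \<kappa> by (simp add: ennreal_mult_top)
  have "(\<integral>\<^sup>+ \<tau>. ennreal \<kappa> * (ennreal ((\<tau> / a' \<tau>) powr q) * indicator {0<..\<delta>} \<tau>) \<partial>lborel)
      \<le> (\<integral>\<^sup>+ s. g s * indicator {0<..1} s \<partial>lborel)"
    using stepB stepC stepD by (metis (no_types, lifting) nn_integral_mono order_trans)
  thus ?thesis using inf by (simp add: top_unique)
qed


lemma F_big: "\<exists>\<delta>>0. \<forall>\<tau>. 0<\<tau> \<and> \<tau> \<le> \<delta> \<longrightarrow> ennreal M \<le> F \<tau>"
proof -
  define f where "f k s = g s * indicator {1 / Suc k..} s" for k :: nat and s :: real
  have inc: "incseq f"
  proof (rule incseq_SucI, rule le_funI)
    fix k s
    have "1 / real (Suc (Suc k)) \<le> 1 / Suc k" by (simp add: frac_le)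
    thus "f k s \<le> f (Suc k) s" unfolding f_def
      by (auto split: split_indicator intro: mult_left_mono)
  qed
  have fm: "f k \<in> borel_measurable lborel" for k unfolding f_def by measurable
  have sup: "(SUP k. f k s) = g s * indicator {0<..} s" for s
  proof (cases "s > 0")
    case True
    obtain k :: nat where k: "1 / Suc k < s" using True by (meson nat_approx_posE)
    have "g s * indicator {0<..} s \<le> (SUP k. f k s)"
      using k True by (intro SUP_upper2[of k]) (auto simp: f_def)
    moreover have "(SUP k. f k s) \<le> g s * indicator {0<..} s"
      using True by (intro SUP_least) (auto simp: f_def split: split_indicator)
    ultimately show ?thesis by simp
  next
    case False
    have "1 / real (Suc k) > 0" for k by simp
    hence "f k s = 0" for k using False unfolding f_def
      by (smt (verit, ccfv_threshold) atLeast_iff indicator_simps(2) mult_zero_right)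
    thus ?thesis using False by simp
  qed
  have "(\<integral>\<^sup>+ s. g s * indicator {0<..} s \<partial>lborel) = (SUP k. integral\<^sup>N lborel (f k))"
    using nn_integral_monotone_convergence_SUP[OF inc fm] sup by simp
  moreover have "(\<integral>\<^sup>+ s. g s * indicator {0<..1} s \<partial>lborel) \<le> (\<integral>\<^sup>+ s. g s * indicator {0<..} s \<partial>lborel)"
    by (intro nn_integral_mono) (auto split: split_indicator)
  ultimately have sinf: "(SUP k. integral\<^sup>N lborel (f k)) = \<infinity>" using G_inf by (simp add: top_unique)
  have "ennreal M < (SUP k. integral\<^sup>N lborel (f k))" unfolding sinf by simp
  then obtain k where k: "ennreal M < integral\<^sup>N lborel (f k)"
    unfolding less_SUP_iff by blast
  have Fk: "integral\<^sup>N lborel (f k) = F (1 / Suc k)" unfolding F_def f_def[abs_def] by simp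
  show ?thesis
  proof (intro exI[of _ "1 / Suc k"] conjI allI impI)
    fix \<tau> assume "0 < \<tau> \<and> \<tau> \<le> 1 / Suc k"
    hence "F (1 / Suc k) \<le> F \<tau>" by (intro F_anti) auto
    thus "ennreal M \<le> F \<tau>" using k Fk by simp
  qed simp
qed

lemma F_lower: assumes "0 < x" "x \<le> y"
  shows "ennreal (c x * y powr (-1-p) * (y - x)) + F y \<le> F x"
proof -
  have "ennreal (c x * y powr (-1-p) * (y - x)) = (\<integral>\<^sup>+ s. ennreal (c x * y powr (-1-p)) * indicator {x..<y} s \<partial>lborel)"
    using assms c_nonneg[of x] by (simp add: nn_integral_cmult_indicator ennreal_mult[symmetric])
  also have "\<dots> \<le> (\<integral>\<^sup>+ s. g s * indicator {x..<y} s \<partial>lborel)"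
  proof (rule nn_integral_mono)
    fix s :: real
    show "ennreal (c x * y powr (-1-p)) * indicator {x..<y} s \<le> g s * indicator {x..<y} s"
    proof (cases "s \<in> {x..<y}")
      case True
      have "c x \<le> c s" using True by (intro c_mono) auto
      moreover have "y powr (-1-p) \<le> s powr (-1-p)" using True assms pq by (intro powr_mono2') auto
      ultimately have "c x * y powr (-1-p) \<le> c s * s powr (-1-p)"
        using c_nonneg[of x] by (intro mult_mono) auto
      thus ?thesis using True c_nonneg[of s] by (simp add: g_def ennreal_mult[symmetric] ennreal_leI)
    qed simp
  qed
  finally show ?thesis using F_split[OF assms(2)] by (simp add: add_right_mono)
qed

lemma F_fin: assumes "\<tau> > 0" shows "F \<tau> < \<infinity>"
proof (cases "\<tau> \<ge> 1")
  case True thus ?thesis using F_anti[OF True] F1_fin by (simp add: le_less_trans)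
next
  case False
  have "(\<integral>\<^sup>+ s. g s * indicator {\<tau>..<1} s \<partial>lborel) \<le> (\<integral>\<^sup>+ s. ennreal (c 1 * \<tau> powr (-1-p)) * indicator {\<tau>..<1} s \<partial>lborel)"
  proof (rule nn_integral_mono)
    fix s :: real
    show "g s * indicator {\<tau>..<1} s \<le> ennreal (c 1 * \<tau> powr (-1-p)) * indicator {\<tau>..<1} s"
    proof (cases "s \<in> {\<tau>..<1}")
      case True
      have "c s \<le> c 1" using True by (intro c_mono) auto
      moreover have "s powr (-1-p) \<le> \<tau> powr (-1-p)" using True assms pq by (intro powr_mono2') auto
      ultimately have "c s * s powr (-1-p) \<le> c 1 * \<tau> powr (-1-p)"
        using c_nonneg[of s] by (intro mult_mono) auto
      thus ?thesis using True c_nonneg[of s] by (simp add: g_def ennreal_mult[symmetric] ennreal_leI)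
    qed simp
  qed
  also have "\<dots> < \<infinity>" using False by (simp add: nn_integral_cmult_indicator ennreal_mult_less_top)
  finally show ?thesis using F_split[of \<tau> 1] False F1_fin by simp
qed

definition f where "f t = enn2real (F t)"

lemma Ff: "t > 0 \<Longrightarrow> F t = ennreal (f t)"
  using F_fin by (simp add: f_def ennreal_enn2real_if less_top)

lemma f_nonneg: "f t \<ge> 0" by (simp add: f_def)

definition e where "e t = t powr p * f t"

lemma Ee: assumes "t \<ge> 0" shows "E_fun n A t = ereal (e t)"
proof (cases "t = 0")
  case True thus ?thesis by (simp add: E_eq e_def zero_ennreal.rep_eq zero_ereal_def)
next
  case False
  hence "t > 0" using assms by simp
  thus ?thesis by (simp add: E_eq e_def Ff ennreal_mult[symmetric] f_nonneg)
qed

lemma e_nonneg: "e t \<ge> 0" by (simp add: e_def f_nonneg)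
lemma e0: "e 0 = 0" by (simp add: e_def)


lemma f_lower: assumes "0 < x" "x \<le> y"
  shows "c x * y powr (-1-p) * (y - x) + f y \<le> f x"
proof -
  have x0: "x > 0" and y0: "y > 0" using assms by auto
  have X: "c x * y powr (-1-p) * (y - x) \<ge> 0" using assms c_nonneg[of x] by simp
  have "ennreal (c x * y powr (-1-p) * (y - x)) + ennreal (f y) \<le> ennreal (f x)"
    using F_lower[OF assms] unfolding Ff[OF x0] Ff[OF y0] .
  hence "ennreal (c x * y powr (-1-p) * (y - x) + f y) \<le> ennreal (f x)"
    by (subst ennreal_plus[OF X f_nonneg])
  thus ?thesis by (subst (asm) ennreal_le_iff) (auto intro: f_nonneg)
qed

definition \<kappa> where "\<kappa> = (2::real) powr (-1-p)"

lemma \<kappa>_pos: "\<kappa> > 0" by (simp add: \<kappa>_def)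

lemma e_ge_c: assumes t: "\<tau> > 0" shows "\<kappa> * c \<tau> \<le> e \<tau>"
proof -
  have "c \<tau> * (2*\<tau>) powr (-1-p) * (2*\<tau> - \<tau>) + f (2*\<tau>) \<le> f \<tau>" using t by (intro f_lower) auto
  hence "c \<tau> * (2*\<tau>) powr (-1-p) * \<tau> \<le> f \<tau>" using f_nonneg[of "2*\<tau>"] by simp
  hence "\<tau> powr p * (c \<tau> * (2*\<tau>) powr (-1-p) * \<tau>) \<le> \<tau> powr p * f \<tau>" by (intro mult_left_mono) auto
  moreover have "\<tau> powr p * (c \<tau> * (2*\<tau>) powr (-1-p) * \<tau>) = \<kappa> * c \<tau>"
  proof -
    have "(2*\<tau>) powr (-1-p) = 2 powr (-1-p) * \<tau> powr (-1-p)" using t by (simp add: powr_mult)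
    moreover have "\<tau> powr p * \<tau> powr (-1-p) * \<tau> = 1"
    proof -
      have "\<tau> powr p * \<tau> powr (-1-p) = \<tau> powr (-1)" using powr_add[of \<tau> p "-1-p"] by simp
      thus ?thesis using t by (simp add: powr_minus)
    qed
    ultimately show ?thesis by (simp add: \<kappa>_def algebra_simps)
  qed
  ultimately show ?thesis by (simp add: e_def)
qed


lemma powpq: "t > 0 \<Longrightarrow> t powr p = t * t powr q"
  using pq powr_add[of t 1 q] by simp

lemma e_small: assumes \<epsilon>: "\<epsilon> > 0" shows "\<exists>\<delta>>0. \<forall>\<tau>. 0<\<tau> \<and> \<tau><\<delta> \<longrightarrow> e \<tau> \<le> \<epsilon> * \<tau>"
proof -
  have n1: "real n - 1 \<ge> 1" using n2 by simp
  define \<epsilon>' where "\<epsilon>' = \<epsilon> / (2 * (real n - 1))"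
  have \<epsilon>': "\<epsilon>' > 0" using \<epsilon> n1 by (simp add: \<epsilon>'_def)
  obtain \<sigma>1 where \<sigma>1: "\<sigma>1 > 0" "\<And>s. 0 \<le> s \<Longrightarrow> s \<le> \<sigma>1 \<Longrightarrow> c s \<le> \<epsilon>' * s"
    using c_small[OF \<epsilon>'] by auto
  define \<sigma> where "\<sigma> = min \<sigma>1 1"
  have \<sigma>: "\<sigma> > 0" "\<sigma> \<le> \<sigma>1" using \<sigma>1 by (auto simp: \<sigma>_def)
  define Fs where "Fs = f \<sigma>"
  have Fs: "Fs \<ge> 0" by (simp add: Fs_def f_nonneg)
  have fb: "f \<tau> \<le> \<epsilon>' * ((real n - 1) * \<tau> powr (-q)) + Fs" if t: "0 < \<tau>" "\<tau> \<le> \<sigma>" for \<tau>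
  proof -
    have "(\<integral>\<^sup>+ s. g s * indicator {\<tau>..<\<sigma>} s \<partial>lborel) \<le> (\<integral>\<^sup>+ s. ennreal \<epsilon>' * (ennreal (s powr (-p)) * indicator {\<tau>..} s) \<partial>lborel)"
    proof (rule nn_integral_mono)
      fix s :: real
      show "g s * indicator {\<tau>..<\<sigma>} s \<le> ennreal \<epsilon>' * (ennreal (s powr (-p)) * indicator {\<tau>..} s)"
      proof (cases "s \<in> {\<tau>..<\<sigma>}")
        case True
        hence sp: "s > 0" using t by auto
        have "c s \<le> \<epsilon>' * s" using True t \<sigma> by (intro \<sigma>1(2)) auto
        hence "c s * s powr (-1-p) \<le> \<epsilon>' * s * s powr (-1-p)" by (intro mult_right_mono) auto
        also have "\<epsilon>' * s * s powr (-1-p) = \<epsilon>' * s powr (-p)"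
          using powr_add[of s 1 "-1-p"] sp by simp
        finally have "ennreal (c s * s powr (-1-p)) \<le> ennreal (\<epsilon>' * s powr (-p))" by (rule ennreal_leI)
        thus ?thesis using True c_nonneg[of s] \<epsilon>' by (simp add: g_def ennreal_mult[symmetric])
      qed simp
    qed
    also have "\<dots> = ennreal \<epsilon>' * (\<integral>\<^sup>+ s. ennreal (s powr (-p)) * indicator {\<tau>..} s \<partial>lborel)"
      by (rule nn_integral_cmult) measurable
    also have "(\<integral>\<^sup>+ s. ennreal (s powr (-p)) * indicator {\<tau>..} s \<partial>lborel) = ennreal (\<tau> powr (1-p) / (p-1))"
      using t pq by (intro tail_powr) auto
    also have "\<tau> powr (1-p) / (p-1) = (real n - 1) * \<tau> powr (-q)"
    proof -
      have pinv: "1/(p-1) = real n - 1" using pq by (auto simp: field_simps)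
      have "\<tau> powr (1-p) / (p-1) = 1/(p-1) * \<tau> powr (1-p)" by simp
      thus ?thesis unfolding pinv using pq by simp
    qed
    finally have I0: "(\<integral>\<^sup>+ s. g s * indicator {\<tau>..<\<sigma>} s \<partial>lborel) \<le> ennreal \<epsilon>' * ennreal ((real n - 1) * \<tau> powr (-q))" .
    have X: "(real n - 1) * \<tau> powr (-q) \<ge> 0" using n1 by simp
    have I: "(\<integral>\<^sup>+ s. g s * indicator {\<tau>..<\<sigma>} s \<partial>lborel) \<le> ennreal (\<epsilon>' * ((real n - 1) * \<tau> powr (-q)))"
      using I0 by (subst ennreal_mult[OF _ X]) (use \<epsilon>' in auto)
    have "ennreal (f \<tau>) = (\<integral>\<^sup>+ s. g s * indicator {\<tau>..<\<sigma>} s \<partial>lborel) + ennreal Fs"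
      using F_split[OF t(2)] Ff t \<sigma> by (simp add: Fs_def)
    also have "\<dots> \<le> ennreal (\<epsilon>' * ((real n - 1) * \<tau> powr (-q))) + ennreal Fs"
      using I by (rule add_right_mono)
    also have "\<dots> = ennreal (\<epsilon>' * ((real n - 1) * \<tau> powr (-q)) + Fs)"
      using \<epsilon>' n1 Fs by (subst ennreal_plus) auto
    finally show ?thesis by (subst (asm) ennreal_le_iff) (use \<epsilon>' n1 Fs in auto)
  qed
  define \<delta> where "\<delta> = min \<sigma> ((\<epsilon> / (2 * (Fs + 1))) powr (real n - 1))"
  have \<delta>: "\<delta> > 0" using \<sigma> \<epsilon> Fs by (simp add: \<delta>_def)
  show ?thesis
  proof (intro exI[of _ \<delta>] conjI allI impI)
    show "\<delta> > 0" by (rule \<delta>)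
    fix \<tau> assume t: "0 < \<tau> \<and> \<tau> < \<delta>"
    have t\<sigma>: "\<tau> \<le> \<sigma>" using t by (simp add: \<delta>_def)
    have "\<tau> powr q \<le> ((\<epsilon> / (2 * (Fs + 1))) powr (real n - 1)) powr q"
      using t pq by (intro powr_mono2) (auto simp: \<delta>_def)
    also have "\<dots> = \<epsilon> / (2 * (Fs + 1))"
      using pq Fs \<epsilon> by (simp add: powr_powr mult.commute)
    finally have tq: "\<tau> powr q * Fs \<le> \<epsilon> / 2"
    proof -
      assume h: "\<tau> powr q \<le> \<epsilon> / (2 * (Fs + 1))"
      have "\<tau> powr q * Fs \<le> \<epsilon> / (2 * (Fs + 1)) * Fs" using h Fs by (intro mult_right_mono) auto
      also have "\<dots> \<le> \<epsilon> / 2" using Fs \<epsilon> by (simp add: field_simps)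
      finally show ?thesis .
    qed
    have "e \<tau> = \<tau> powr p * f \<tau>" by (simp add: e_def)
    also have "\<dots> \<le> \<tau> powr p * (\<epsilon>' * ((real n - 1) * \<tau> powr (-q)) + Fs)"
      using fb[of \<tau>] t t\<sigma> by (intro mult_left_mono) auto
    also have "\<dots> = (\<epsilon>' * (real n - 1)) * (\<tau> powr p * \<tau> powr (-q)) + \<tau> powr p * Fs"
      by (simp add: algebra_simps)
    also have "\<epsilon>' * (real n - 1) = \<epsilon>/2" using n1 by (simp add: \<epsilon>'_def field_simps)
    also have "\<tau> powr p * Fs = \<tau> * (\<tau> powr q * Fs)" using t by (simp add: powpq)
    also have "\<tau> powr p * \<tau> powr (-q) = \<tau>" using powr_add[of \<tau> p "-q"] pq t by simp
    also have "\<tau> * (\<tau> powr q * Fs) \<le> \<tau> * (\<epsilon>/2)" using tq t by (intro mult_left_mono) auto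
    finally show "e \<tau> \<le> \<epsilon> * \<tau>" by simp
  qed
qed

lemma e_big: "\<exists>\<delta>>0. \<forall>\<tau>. 0<\<tau> \<and> \<tau> \<le> \<delta> \<longrightarrow> M * \<tau> powr p \<le> e \<tau>"
proof -
  obtain \<delta> where \<delta>: "\<delta> > 0" "\<And>\<tau>. 0<\<tau> \<Longrightarrow> \<tau> \<le> \<delta> \<Longrightarrow> ennreal M \<le> F \<tau>" using F_big[of M] by auto
  have "M * \<tau> powr p \<le> e \<tau>" if t: "0<\<tau>" "\<tau> \<le> \<delta>" for \<tau>
  proof -
    have "M \<le> f \<tau>"
    proof (cases "M \<ge> 0")
      case True thus ?thesis using \<delta>(2)[OF t] Ff[of \<tau>] t f_nonneg[of \<tau>] by (simp add: ennreal_le_iff)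
    qed (use f_nonneg[of \<tau>] in simp)
    thus ?thesis using mult_right_mono[of M "f \<tau>" "\<tau> powr p"] by (simp add: e_def mult.commute)
  qed
  thus ?thesis using \<delta> by auto
qed

lemma e_strict: assumes l: "0 < l" "l < 1" and s: "\<sigma> > 0"
  shows "l^n * (e \<sigma> + (1 - l^(n-1)) * c (l^(n-1) * \<sigma>)) \<le> e (l^(n-1) * \<sigma>)"
proof -
  define cc where "cc = l^(n-1)"
  have cc: "cc > 0" "cc < 1" using l n2 by (auto simp: cc_def power_less_one_iff)
  have "c (cc*\<sigma>) * \<sigma> powr (-1-p) * (\<sigma> - cc*\<sigma>) + f \<sigma> \<le> f (cc*\<sigma>)"
    using cc s by (intro f_lower) auto
  moreover have "c (cc*\<sigma>) * \<sigma> powr (-1-p) * (\<sigma> - cc*\<sigma>) = (1-cc) * c (cc*\<sigma>) * \<sigma> powr (-p)"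
  proof -
    have "\<sigma> powr (-1-p) * \<sigma> = \<sigma> powr (-p)" using powr_add[of \<sigma> "-1-p" 1] s by simp
    note hyp = this
    have e1: "c (cc*\<sigma>) * \<sigma> powr (-1-p) * (\<sigma> - cc*\<sigma>) = c (cc*\<sigma>) * (\<sigma> powr (-1-p) * \<sigma>) * (1 - cc)"
      by (simp add: algebra_simps)
    show ?thesis unfolding e1 hyp by simp
  qed
  ultimately have h: "(1-cc) * c (cc*\<sigma>) * \<sigma> powr (-p) + f \<sigma> \<le> f (cc*\<sigma>)" by simp
  have ccp: "cc powr p = l^n"
  proof -
    have "cc powr p = l powr (real (n-1) * p)" using l by (simp add: cc_def powr_realpow[symmetric] powr_powr)
    also have "real (n-1) * p = real n"
    proof -
      have nz: "real n - 1 \<noteq> 0" using n2 by simp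
      show ?thesis using n2 nz by (simp add: p_def holder_conj_def of_nat_diff)
    qed
    finally show ?thesis using l by (simp add: powr_realpow)
  qed
  have ee: "e (cc*\<sigma>) = cc powr p * (\<sigma> powr p * f (cc*\<sigma>))" using cc s by (simp add: e_def powr_mult)
  have "\<sigma> powr p * f (cc*\<sigma>) \<ge> \<sigma> powr p * ((1-cc) * c (cc*\<sigma>) * \<sigma> powr (-p) + f \<sigma>)"
    using h by (intro mult_left_mono) auto
  hence "cc powr p * (\<sigma> powr p * f (cc*\<sigma>)) \<ge> cc powr p * (\<sigma> powr p * ((1-cc) * c (cc*\<sigma>) * \<sigma> powr (-p) + f \<sigma>))"
    by (rule mult_left_mono) auto
  moreover have "\<sigma> powr p * ((1-cc) * c (cc*\<sigma>) * \<sigma> powr (-p) + f \<sigma>) = (1-cc) * c (cc*\<sigma>) + e \<sigma>"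
  proof -
    have hyp: "\<sigma> powr p * \<sigma> powr (-p) = 1" using s by (simp add: powr_minus)
    have "\<sigma> powr p * ((1-cc) * c (cc*\<sigma>) * \<sigma> powr (-p) + f \<sigma>) = (1-cc) * c (cc*\<sigma>) * (\<sigma> powr p * \<sigma> powr (-p)) + \<sigma> powr p * f \<sigma>"
      by (simp add: algebra_simps)
    thus ?thesis unfolding hyp by (simp add: e_def)
  qed
  ultimately have fin: "cc powr p * ((1-cc) * c (cc*\<sigma>) + e \<sigma>) \<le> e (cc*\<sigma>)"
    unfolding ee by (metis (no_types, lifting))
  show ?thesis using fin unfolding ccp by (simp add: cc_def add.commute)
qed


definition b where "b t = real_of_ereal (B_fun n A t)"

lemma b_basic: assumes t: "t \<ge> 0"
  shows "B_fun n A t = ereal (b t)" "\<And>\<tau>. \<tau> \<ge> 0 \<Longrightarrow> \<tau> * t - e \<tau> \<le> b t"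
    "\<And>y. (\<And>\<tau>. \<tau> \<ge> 0 \<Longrightarrow> \<tau> * t - e \<tau> \<le> y) \<Longrightarrow> b t \<le> y"
proof -
  have B: "B_fun n A = young_conj (E_fun n A)" using n2 by (simp add: B_fun_def)
  define T0 where "T0 = (t+1)/\<kappa>"
  have T0: "T0 \<ge> 0" "\<kappa> * T0 = t + 1" using t \<kappa>_pos by (auto simp: T0_def)
  have K: "\<tau> * t - e \<tau> \<le> \<kappa> * a T0" if tau: "\<tau> \<ge> 0" for \<tau>
  proof (cases "\<tau> = 0")
    case True thus ?thesis using e0 ann[OF T0(1)] \<kappa>_pos by simp
  next
    case False
    hence tp: "\<tau> > 0" using tau by simp
    have "T0 * \<tau> - a T0 \<le> c \<tau>" using T0 by (intro c_basic(2))
    hence "\<kappa> * (T0 * \<tau> - a T0) \<le> \<kappa> * c \<tau>" using \<kappa>_pos by simp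
    also have "\<dots> \<le> e \<tau>" using e_ge_c[OF tp] .
    finally have "\<kappa> * (T0 * \<tau>) - \<kappa> * a T0 \<le> e \<tau>" by (simp add: right_diff_distrib)
    moreover have "\<kappa> * (T0 * \<tau>) = (t+1) * \<tau>" using T0(2) by (simp add: mult.assoc[symmetric])
    ultimately have "(t+1) * \<tau> - \<kappa> * a T0 \<le> e \<tau>" by simp
    thus ?thesis using tp by (simp add: algebra_simps)
  qed
  have H1: "\<And>\<tau>. \<tau> \<ge> 0 \<Longrightarrow> E_fun n A \<tau> = ereal (e \<tau>)" by (rule Ee)
  note yc = yc_real[where H="E_fun n A" and h=e and t=t and K="\<kappa> * a T0", OF H1 K]
  show "B_fun n A t = ereal (b t)" using yc(1) by (simp add: B b_def)
  show "\<tau> * t - e \<tau> \<le> b t" if "\<tau> \<ge> 0" for \<tau> unfolding b_def B by (rule yc(2)) (use that in auto)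
  show "b t \<le> y" if "\<And>\<tau>. \<tau> \<ge> 0 \<Longrightarrow> \<tau> * t - e \<tau> \<le> y" for y
    unfolding b_def B by (rule yc(3)) (use that in auto)
qed

lemma b0: "b 0 = 0"
proof -
  have "b 0 \<le> 0" by (rule b_basic(3)) (auto simp: e_nonneg)
  moreover have "0 * 0 - e 0 \<le> b 0" by (rule b_basic(2)) auto
  ultimately show ?thesis by (simp add: e0)
qed

lemma b_nonneg: "t \<ge> 0 \<Longrightarrow> b t \<ge> 0"
  using b_basic(2)[of t 0] e0 by simp

lemma bpos: assumes t: "t > 0" shows "b t > 0"
proof -
  obtain d where d: "d > 0" "\<And>\<tau>. 0<\<tau> \<Longrightarrow> \<tau><d \<Longrightarrow> e \<tau> \<le> (t/2) * \<tau>" using e_small[of "t/2"] t by auto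
  have "e (d/2) \<le> (t/2)*(d/2)" using d(2)[of "d/2"] d by simp
  moreover have "(t/2)*(d/2) < (d/2) * t" using d t by simp
  ultimately have "0 < (d/2) * t - e (d/2)" by linarith
  also have "\<dots> \<le> b t" using d t by (intro b_basic(2)) auto
  finally show ?thesis .
qed

lemma bconvex: "convex_on {0<..} b"
proof (rule convex_onI)
  fix u x y :: real assume u: "u > 0" "u < 1" and xy: "x \<in> {0<..}" "y \<in> {0<..}"
  have "b ((1-u)*x + u*y) \<le> (1-u) * b x + u * b y"
  proof (rule b_basic(3))
    show "(1-u)*x + u*y \<ge> 0" using u xy by (auto intro: add_nonneg_nonneg)
    fix \<tau> :: real assume t: "\<tau> \<ge> 0"
    have "\<tau> * ((1-u)*x + u*y) - e \<tau> = (1-u) * (\<tau> * x - e \<tau>) + u * (\<tau> * y - e \<tau>)"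
      by (simp add: algebra_simps)
    also have "\<dots> \<le> (1-u) * b x + u * b y"
      using b_basic(2)[of x \<tau>] b_basic(2)[of y \<tau>] t u xy
      by (intro add_mono mult_left_mono) auto
    finally show "\<tau> * ((1-u)*x + u*y) - e \<tau> \<le> (1-u) * b x + u * b y" .
  qed
  thus "b ((1 - u) *\<^sub>R x + u *\<^sub>R y) \<le> (1 - u) * b x + u * b y" by simp
qed simp

lemma bcont: "continuous_on {0<..} b"
  by (rule convex_on_continuous[OF _ bconvex]) simp


lemma bscale: assumes l: "0 < l" "l < 1" and t: "t > 0" shows "b (l*t) < l^n * b t"
proof -
  define cc where "cc = l^(n-1)"
  have cc: "cc > 0" "cc < 1" using l n2 by (auto simp: cc_def power_less_one_iff)
  have ccl: "cc * l = l^n" using n2 by (simp add: cc_def power_Suc[symmetric] mult.commute)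
  define bt where "bt = b t"
  have bt: "bt > 0" using bpos t by (simp add: bt_def)
  define \<sigma>0 where "\<sigma>0 = bt / (2*t)"
  have \<sigma>0: "\<sigma>0 > 0" using bt t by (simp add: \<sigma>0_def)
  define \<eta> where "\<eta> = l^n * (1-cc) * c (cc*\<sigma>0)"
  have \<eta>: "\<eta> > 0" using l cc \<sigma>0 c_pos[of "cc*\<sigma>0"] by (simp add: \<eta>_def)
  have ln: "l^n > 0" using l by simp
  have main: "\<tau> * (l*t) - e \<tau> \<le> max (l^n*bt - \<eta>) (l^n*bt/2)" if tau: "\<tau> \<ge> 0" for \<tau>
  proof -
    define \<sigma> where "\<sigma> = \<tau> / cc"
    have tau_eq: "\<tau> = cc * \<sigma>" using cc by (simp add: \<sigma>_def)
    have \<sigma>nn: "\<sigma> \<ge> 0" using tau cc by (simp add: \<sigma>_def)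
    have lhs: "\<tau> * (l*t) = l^n * (\<sigma> * t)" unfolding tau_eq ccl[symmetric] by (simp add: algebra_simps)
    show ?thesis
    proof (cases "\<sigma> \<ge> \<sigma>0")
      case True
      hence sp: "\<sigma> > 0" using \<sigma>0 by simp
      have "l^n * (e \<sigma> + (1 - l^(n-1)) * c (l^(n-1) * \<sigma>)) \<le> e (l^(n-1) * \<sigma>)"
        by (rule e_strict[OF l sp])
      hence es: "l^n * (e \<sigma> + (1 - cc) * c (cc * \<sigma>)) \<le> e \<tau>" by (simp add: cc_def tau_eq)
      have "c (cc*\<sigma>0) \<le> c (cc*\<sigma>)" using True cc by (intro c_mono) simp
      hence "\<eta> \<le> l^n * ((1 - cc) * c (cc * \<sigma>))" using ln cc by (simp add: \<eta>_def mult.assoc mult_left_mono)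
      hence "l^n * e \<sigma> + \<eta> \<le> e \<tau>" using es by (simp add: algebra_simps)
      moreover have "\<sigma> * t - e \<sigma> \<le> bt" unfolding bt_def using \<sigma>nn t by (intro b_basic(2)) auto
      hence "l^n * (\<sigma> * t - e \<sigma>) \<le> l^n * bt" using ln by simp
      ultimately have "l^n * (\<sigma> * t) - e \<tau> \<le> l^n*bt - \<eta>" by (simp add: algebra_simps)
      hence "\<tau> * (l*t) - e \<tau> \<le> l^n*bt - \<eta>" using lhs by linarith
      thus ?thesis by (rule order_trans) simp
    next
      case False
      have "\<tau> * (l*t) \<le> l^n * (\<sigma>0 * t)" unfolding lhs using False t ln by (intro mult_left_mono) auto
      also have "l^n * (\<sigma>0 * t) = l^n*bt/2" using t by (simp add: \<sigma>0_def)
      finally show ?thesis using e_nonneg[of \<tau>] by simp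
    qed
  qed
  have "b (l*t) \<le> max (l^n*bt - \<eta>) (l^n*bt/2)"
    using l t by (intro b_basic(3) main) auto
  also have "\<dots> < l^n * bt" using \<eta> ln bt by simp
  finally show ?thesis by (simp add: bt_def)
qed

lemma bsmall: assumes \<epsilon>: "\<epsilon> > 0" shows "\<exists>d>0. \<forall>t. 0<t \<and> t<d \<longrightarrow> b t \<le> \<epsilon> * t^n"
proof -
  define M where "M = max 1 (1/\<epsilon>)"
  have M: "M \<ge> 1" "M \<ge> 1/\<epsilon>" by (auto simp: M_def)
  have Mn: "M^(n-1) \<ge> M" using power_increasing[of 1 "n-1" M] M n2 by simp
  have Me: "1 \<le> \<epsilon> * M^(n-1)"
  proof -
    have "1 \<le> \<epsilon> * M" using M \<epsilon> by (simp add: field_simps)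
    also have "\<dots> \<le> \<epsilon> * M^(n-1)" using Mn \<epsilon> by simp
    finally show ?thesis .
  qed
  obtain \<delta>1 where \<delta>1: "\<delta>1 > 0" "\<And>\<tau>. 0<\<tau> \<Longrightarrow> \<tau> \<le> \<delta>1 \<Longrightarrow> M * \<tau> powr p \<le> e \<tau>"
    using e_big[of M] by auto
  define d where "d = \<kappa> * c \<delta>1 / \<delta>1"
  have d: "d > 0" using \<kappa>_pos c_pos[OF \<delta>1(1)] \<delta>1 by (simp add: d_def)
  have "b t \<le> \<epsilon> * t^n" if t: "0 < t" "t < d" for t
  proof -
    have Mp: "M^(n-1) > 0" using M by simp
    have "b t \<le> t^n / M^(n-1)"
    proof (rule b_basic(3))
      show "t \<ge> 0" using t by simp
      fix \<tau> :: real assume tau: "\<tau> \<ge> 0"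
      have y0: "0 \<le> t^n / M^(n-1)" using t Mp by simp
      show "\<tau> * t - e \<tau> \<le> t^n / M^(n-1)"
      proof (cases "\<tau> = 0")
        case True thus ?thesis using e0 y0 by simp
      next
        case False
        hence tp: "\<tau> > 0" using tau by simp
        show ?thesis
        proof (cases "\<tau> \<ge> \<delta>1")
          case True
          have "c ((\<delta>1/\<tau>) * \<tau>) \<le> (\<delta>1/\<tau>) * c \<tau>" using True \<delta>1 tp by (intro c_scale) auto
          hence "c \<delta>1 \<le> (\<delta>1/\<tau>) * c \<tau>" using tp by simp
          hence "\<tau> * (c \<delta>1 / \<delta>1) \<le> c \<tau>" using tp \<delta>1 by (simp add: field_simps)
          hence "\<kappa> * (\<tau> * (c \<delta>1 / \<delta>1)) \<le> \<kappa> * c \<tau>" using \<kappa>_pos by (rule mult_left_mono[OF _ less_imp_le])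
          hence "\<tau> * d \<le> \<kappa> * c \<tau>" by (simp add: d_def mult_ac)
          also have "\<dots> \<le> e \<tau>" by (rule e_ge_c[OF tp])
          finally have "\<tau> * d \<le> e \<tau>" .
          moreover have "\<tau> * t \<le> \<tau> * d" using t tp by simp
          ultimately show ?thesis using y0 by simp
        next
          case False
          have eb: "M * \<tau> powr p \<le> e \<tau>" using \<delta>1(2)[of \<tau>] tp False by simp
          have Mtp: "M * \<tau> powr p = \<tau> * (M * \<tau> powr q)" using tp by (simp add: powpq algebra_simps)
          show ?thesis
          proof (cases "\<tau> powr q \<ge> t / M")
            case True
            hence "t \<le> M * \<tau> powr q" using M by (simp add: field_simps)
            hence "\<tau> * t \<le> \<tau> * (M * \<tau> powr q)" using tp by simp
            thus ?thesis using eb Mtp y0 by simp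
          next
            case False
            hence lt: "\<tau> powr q < t / M" by simp
            have "\<tau> = (\<tau> powr q) powr (real n - 1)" using tp pq by (simp add: powr_powr)
            also have "\<dots> < (t / M) powr (real n - 1)"
              using lt tp n2 by (intro powr_less_mono2) auto
            also have "\<dots> = (t/M)^(n-1)" using t M n2 by (simp add: powr_realpow[symmetric] of_nat_diff)
            finally have "\<tau> * t \<le> (t/M)^(n-1) * t" using t by simp
            also have "\<dots> = t^n / M^(n-1)"
            proof -
              obtain k where nk: "n = Suc k" using n2 by (cases n) auto
              show ?thesis unfolding nk by (simp add: power_divide power_Suc2)
            qed
            finally show ?thesis using e_nonneg[of \<tau>] by simp
          qed
        qed
      qed
    qed
    also have "t^n / M^(n-1) \<le> \<epsilon> * t^n"
    proof -
      have "t^n * 1 \<le> t^n * (\<epsilon> * M^(n-1))" using Me t by (intro mult_left_mono) auto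
      thus ?thesis using Mp by (simp add: field_simps)
    qed
    finally show ?thesis .
  qed
  thus ?thesis using d by auto
qed

end



lemma case2:
  fixes n :: nat and A :: "real \<Rightarrow> ereal" and \<phi> :: "real \<Rightarrow> real"
  assumes "n \<ge> 2"
    and "young_function A" and "cond_C1 n A" and "cond_C2 A" and "cond_C3 n A"
    and "gauge_function n \<phi>"
  shows "strict_mono_on {0<..} (J_fun n A \<phi>) \<and>
         (J_fun n A \<phi> \<longlongrightarrow> 0) (at_right 0) \<and>
         filterlim (J_fun n A \<phi>) at_top at_top \<and>
         bij_betw (J_fun n A \<phi>) {0..} {0..}"
proof -
  interpret ycase2 A n by unfold_locales (use assms in auto)
  interpret bfun n b by unfold_locales (use n2 in \<open>auto simp: b0 bpos bcont bscale\<close>)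
  show ?thesis by (rule J_main) (use assms in \<open>auto simp: b_basic(1) bsmall\<close>)
qed

theorem lemma4p2:
  fixes n :: nat and A :: "real \<Rightarrow> ereal" and \<phi> :: "real \<Rightarrow> real"
  assumes "n \<ge> 1"
    and "young_function A" and "cond_C1 n A" and "cond_C2 A" and "cond_C3 n A"
    and "gauge_function n \<phi>"
  shows "strict_mono_on {0<..} (J_fun n A \<phi>) \<and>
         (J_fun n A \<phi> \<longlongrightarrow> 0) (at_right 0) \<and>
         filterlim (J_fun n A \<phi>) at_top at_top \<and>
         bij_betw (J_fun n A \<phi>) {0..} {0..}"
proof (cases "n = 1")
  case True
  thus ?thesis using case1[of A \<phi>] assms by simp
next
  case False
  thus ?thesis using case2[of n A \<phi>] assms by simp
qed

end
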